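(* Let $A\in\mathbb{R}^{m\times n}$ be semi-monotone, let $A=P_1-R_1+S_1$ be a double proper weak regular splitting and $A=P_2-R_2+S_2$ a double proper regular splitting of $A$. Suppose $N(S_2)=N(P_2)$, $R(S_2)=R(P_2)$, $1\notin\sigma(S_2P_1^{\dagger})$, $-1\notin\sigma(R_2P_1^{\dagger})$, $\widehat{A}^{\dagger}\geq 0$ and $\widehat{\mathcal{A}}^{\dagger}\geq 0$, where $\widehat{A}=(I-S_2P_1^{\dagger})A$ and $\widehat{\mathcal{A}}=(I+R_2P_1^{\dagger})A$. Let $\widehat{P}=\widehat{\mathcal{P}}=P_2$, $\widehat{R}=R_2-S_2P_1^{\dagger}R_1$ and $\widehat{\mathcal{R}}=R_2P_1^{\dagger}R_1-S_2$. If $\widehat{\mathcal{P}}^{\dagger}\widehat{\mathcal{R}}\geq\widehat{P}^{\dagger}\widehat{R}$ and $\widehat{\mathcal{P}}^{\dagger}\widehat{\mathcal{A}}\geq\widehat{P}^{\dagger}\widehat{A}$, then $\rho(\mathcal{W}_{12})\leq\rho(W_{12})<1$, where $$W_{12}=\begin{pmatrix} P_2^{\dagger}R_2-P_2^{\dagger}S_2P_1^{\dagger}R_1 & P_2^{\dagger}S_2P_1^{\dagger}S_1\\ I & 0\end{pmatrix},\qquad \mathcal{W}_{12}=\begin{pmatrix} P_2^{\dagger}R_2P_1^{\dagger}R_1-P_2^{\dagger}S_2 & -P_2^{\dagger}R_2P_1^{\dagger}S_1\\ I & 0\end{pmatrix}.$$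
   Context: For $M\in\mathbb{R}^{m\times n}$, $M^{\dagger}$ is its Moore–Penrose inverse, $R(M)$, $N(M)$ its range and null space; inequalities are entrywise; $\rho$ is the spectral radius, $\sigma$ the spectrum. $A$ is semi-monotone if $A^{\dagger}\geq0$. A double splitting $A=P-R+S$ is a double proper splitting if $R(P)=R(A)$ and $N(P)=N(A)$; it is double proper regular if moreover $P^{\dagger}\geq0$, $R\geq0$, $S\leq0$; double proper weak regular if moreover $P^{\dagger}\geq 0$, $P^{\dagger}R\geq 0$, $P^{\dagger}S\leq 0$. *)

theory Defs
  imports "Jordan_Normal_Form.Spectral_Radius" "Jordan_Normal_Form.Matrix_Kernel"
begin

definition is_mp_inverse :: "real mat \<Rightarrow> real mat \<Rightarrow> bool" where
  "is_mp_inverse M X \<longleftrightarrow> X \<in> carrier_mat (dim_col M) (dim_row M) \<and>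
     M * X * M = M \<and> X * M * X = X \<and>
     transpose_mat (M * X) = M * X \<and> transpose_mat (X * M) = X * M"

definition mp_inv :: "real mat \<Rightarrow> real mat" where
  "mp_inv M = (THE X. is_mp_inverse M X)"

definition mat_range :: "real mat \<Rightarrow> real vec set" where
  "mat_range M = {M *\<^sub>v x | x. x \<in> carrier_vec (dim_col M)}"

definition mat_nonneg :: "real mat \<Rightarrow> bool" where
  "mat_nonneg M \<longleftrightarrow> (\<forall>i < dim_row M. \<forall>j < dim_col M. M $$ (i,j) \<ge> 0)"

definition mat_nonpos :: "real mat \<Rightarrow> bool" where
  "mat_nonpos M \<longleftrightarrow> (\<forall>i < dim_row M. \<forall>j < dim_col M. M $$ (i,j) \<le> 0)"

definition mat_ge :: "real mat \<Rightarrow> real mat \<Rightarrow> bool" where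
  "mat_ge M N \<longleftrightarrow> dim_row M = dim_row N \<and> dim_col M = dim_col N \<and>
     (\<forall>i < dim_row M. \<forall>j < dim_col M. M $$ (i,j) \<ge> N $$ (i,j))"

definition semi_monotone :: "real mat \<Rightarrow> bool" where
  "semi_monotone M \<longleftrightarrow> mat_nonneg (mp_inv M)"

definition rspectrum :: "real mat \<Rightarrow> complex set" where
  "rspectrum M = spectrum (map_mat complex_of_real M)"

definition rspectral_radius :: "real mat \<Rightarrow> real" where
  "rspectral_radius M = spectral_radius (map_mat complex_of_real M)"

definition double_proper_splitting :: "real mat \<Rightarrow> real mat \<Rightarrow> real mat \<Rightarrow> real mat \<Rightarrow> bool" where
  "double_proper_splitting A P R S \<longleftrightarrow>
     P \<in> carrier_mat (dim_row A) (dim_col A) \<and> R \<in> carrier_mat (dim_row A) (dim_col A) \<and>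
     S \<in> carrier_mat (dim_row A) (dim_col A) \<and> A = P - R + S \<and>
     mat_range P = mat_range A \<and> mat_kernel P = mat_kernel A"

definition double_proper_regular_splitting where
  "double_proper_regular_splitting A P R S \<longleftrightarrow> double_proper_splitting A P R S \<and>
     mat_nonneg (mp_inv P) \<and> mat_nonneg R \<and> mat_nonpos S"

definition double_proper_weak_regular_splitting where
  "double_proper_weak_regular_splitting A P R S \<longleftrightarrow> double_proper_splitting A P R S \<and>
     mat_nonneg (mp_inv P) \<and> mat_nonneg (mp_inv P * R) \<and> mat_nonpos (mp_inv P * S)"

end

theory Submission
  imports Defs
begin

lemma assoc': "dim_col (A::'a::semiring_0 mat) = dim_row B \<Longrightarrow> dim_col B = dim_row C \<Longrightarrow> A * B * C = A * (B * C)"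
  by (rule assoc_mult_mat, auto)
lemma transpose_mult': "dim_col (A::'a::comm_semiring_0 mat) = dim_row B \<Longrightarrow> transpose_mat (A * B) = transpose_mat B * transpose_mat A"
  by (rule transpose_mult, auto)
lemma mult_add': "dim_col (A::'a::semiring_0 mat) = dim_row B \<Longrightarrow> dim_row B = dim_row C \<Longrightarrow> dim_col B = dim_col C \<Longrightarrow> A * (B + C) = A * B + A * C"
  by (rule mult_add_distrib_mat, auto)
lemma add_mult': "dim_row (A::'a::semiring_0 mat) = dim_row B \<Longrightarrow> dim_col A = dim_col B \<Longrightarrow> dim_col B = dim_row C \<Longrightarrow> (A + B) * C = A * C + B * C"
  by (rule add_mult_distrib_mat, auto)
lemma mult_minus': "dim_col (A::'a::ring mat) = dim_row B \<Longrightarrow> dim_row B = dim_row C \<Longrightarrow> dim_col B = dim_col C \<Longrightarrow> A * (B - C) = A * B - A * C"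
  by (rule mult_minus_distrib_mat, auto)
lemma minus_mult': "dim_row (A::'a::ring mat) = dim_row B \<Longrightarrow> dim_col A = dim_col B \<Longrightarrow> dim_col B = dim_row C \<Longrightarrow> (A - B) * C = A * C - B * C"
  by (rule minus_mult_distrib_mat, auto)
lemma mult_smult': "dim_col (A::'a::comm_ring mat) = dim_row B \<Longrightarrow> A * (k \<cdot>\<^sub>m B) = k \<cdot>\<^sub>m (A * B)"
  by (rule mult_smult_distrib, auto)
lemma smult_mult': "dim_col (A::'a::comm_ring mat) = dim_row B \<Longrightarrow> (k \<cdot>\<^sub>m A) * B = k \<cdot>\<^sub>m (A * B)"
  by (rule eq_matI, auto simp: scalar_prod_def sum_distrib_left ac_simps)
lemma transpose_smult: "transpose_mat (k \<cdot>\<^sub>m A) = k \<cdot>\<^sub>m transpose_mat A"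
  by (rule eq_matI, auto)
lemma transpose_add': "dim_row (A::'a::ab_semigroup_add mat) = dim_row B \<Longrightarrow> dim_col A = dim_col B \<Longrightarrow> transpose_mat (A + B) = transpose_mat A + transpose_mat B"
  by (rule eq_matI, auto)
lemma transpose_minus': "dim_row (A::'a::ab_group_add mat) = dim_row B \<Longrightarrow> dim_col A = dim_col B \<Longrightarrow> transpose_mat (A - B) = transpose_mat A - transpose_mat B"
  by (rule eq_matI, auto)

lemma zero_smult_add[simp]: "dim_row (X::'a::comm_ring_1 mat) = n \<Longrightarrow> dim_col X = n \<Longrightarrow> 0 \<cdot>\<^sub>m 1\<^sub>m n + X = X"
  by (rule eq_matI, auto)

lemma minus_self'[simp]: "dim_row (A::'a::ab_group_add mat) = n \<Longrightarrow> dim_col A = m \<Longrightarrow> A - A = 0\<^sub>m n m"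
  by (rule eq_matI, auto)

lemmas malg = assoc' mult_add' add_mult' mult_minus' minus_mult' mult_smult' smult_mult'

lemma tt_zero:
  fixes Z :: "real mat"
  assumes Z: "Z \<in> carrier_mat a b" and tt: "transpose_mat Z * Z = 0\<^sub>m b b"
  shows "Z = 0\<^sub>m a b"
proof (rule eq_matI)
  fix i j assume i: "i < dim_row (0\<^sub>m a b :: real mat)" and j: "j < dim_col (0\<^sub>m a b :: real mat)"
  hence ia: "i < a" and jb: "j < b" by auto
  have "(transpose_mat Z * Z) $$ (j,j) = (\<Sum>k = 0..<a. Z $$ (k,j) * Z $$ (k,j))"
    using Z jb by (auto simp: index_mult_mat scalar_prod_def)
  hence "(\<Sum>k = 0..<a. Z $$ (k,j) * Z $$ (k,j)) = 0" using tt jb by auto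
  hence "\<forall>k\<in>{0..<a}. Z $$ (k,j) * Z $$ (k,j) = 0"
    by (subst sum_nonneg_eq_0_iff[symmetric], auto)
  with ia have "Z $$ (i,j) * Z $$ (i,j) = 0" by auto
  thus "Z $$ (i,j) = (0\<^sub>m a b :: real mat) $$ (i,j)" using ia jb by auto
qed (insert Z, auto)

lemma mp_unique:
  assumes X: "is_mp_inverse M X" and Y: "is_mp_inverse M Y"
  shows "X = Y"
proof -
  define m where "m = dim_row M"
  define n where "n = dim_col M"
  have M: "M \<in> carrier_mat m n" unfolding m_def n_def by auto
  from X have Xc: "X \<in> carrier_mat n m" and X1: "M * X * M = M" and X2: "X * M * X = X"
    and X3: "transpose_mat (M * X) = M * X" and X4: "transpose_mat (X * M) = X * M"
    unfolding is_mp_inverse_def m_def n_def by auto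
  from Y have Yc: "Y \<in> carrier_mat n m" and Y1: "M * Y * M = M" and Y2: "Y * M * Y = Y"
    and Y3: "transpose_mat (M * Y) = M * Y" and Y4: "transpose_mat (Y * M) = Y * M"
    unfolding is_mp_inverse_def m_def n_def by auto
  have MT: "transpose_mat M = transpose_mat M * (M * Y)"
  proof -
    have "transpose_mat M = transpose_mat ((M * Y) * M)" using Y1 by simp
    also have "\<dots> = transpose_mat M * transpose_mat (M * Y)"
      by (rule transpose_mult, insert M Yc, auto)
    also have "\<dots> = transpose_mat M * (M * Y)" using Y3 by simp
    finally show ?thesis .
  qed
  have MT2: "transpose_mat M = (X * M) * transpose_mat M"
  proof -
    have "transpose_mat M = transpose_mat (M * X * M)" using X1 by simp
    also have "\<dots> = transpose_mat (M * (X * M))" using M Xc by (simp add: assoc_mult_mat)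
    also have "\<dots> = transpose_mat (X * M) * transpose_mat M"
      by (rule transpose_mult, insert M Xc, auto)
    also have "\<dots> = (X * M) * transpose_mat M" using X4 by simp
    finally show ?thesis .
  qed
  have d: "dim_row M = m" "dim_col M = n" "dim_row X = n" "dim_col X = m" "dim_row Y = n" "dim_col Y = m"
    using M Xc Yc by auto
  have "X = X * (M * X)" using X2 d by (simp add: assoc')
  also have "\<dots> = X * transpose_mat (M * X)" using X3 by simp
  also have "\<dots> = X * (transpose_mat X * transpose_mat M)" using d by (simp add: transpose_mult')
  also have "\<dots> = X * (transpose_mat X * (transpose_mat M * (M * Y)))" using MT by simp
  also have "\<dots> = X * (transpose_mat (M * X) * (M * Y))"
    using d by (simp add: assoc' transpose_mult')
  also have "\<dots> = X * ((M * X) * (M * Y))" using X3 by simp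
  also have "\<dots> = (X * M * X) * (M * Y)" using d by (simp add: assoc')
  also have "\<dots> = X * M * Y" using X2 d by (simp add: assoc')
  finally have eX: "X = X * M * Y" .
  have "Y = (Y * M) * Y" using Y2 by simp
  also have "\<dots> = transpose_mat (Y * M) * Y" using Y4 by simp
  also have "\<dots> = (transpose_mat M * transpose_mat Y) * Y" using d by (simp add: transpose_mult')
  also have "\<dots> = ((X * M) * transpose_mat M * transpose_mat Y) * Y" using MT2 by simp
  also have "\<dots> = ((X * M) * transpose_mat (Y * M)) * Y"
    using d by (simp add: assoc' transpose_mult')
  also have "\<dots> = ((X * M) * (Y * M)) * Y" using Y4 by simp
  also have "\<dots> = X * M * (Y * M * Y)" using d by (simp add: assoc')
  also have "\<dots> = X * M * Y" using Y2 by simp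
  finally have eY: "Y = X * M * Y" .
  from eX eY show ?thesis by simp
qed

fun evalL :: "real mat \<Rightarrow> real list \<Rightarrow> real mat" where
  "evalL B [] = 0\<^sub>m (dim_row B) (dim_row B)"
| "evalL B (c # cs) = c \<cdot>\<^sub>m 1\<^sub>m (dim_row B) + B * evalL B cs"

lemma evalL_dim[simp]: "dim_row (evalL B cs) = dim_row B" "dim_col (evalL B cs) = dim_row B"
  by (induct cs, auto)

lemma evalL_comm: assumes B: "B \<in> carrier_mat n n"
  shows "B * evalL B cs = evalL B cs * B"
proof (induct cs)
  case Nil
  then show ?case using B by auto
next
  case (Cons c cs)
  have d: "dim_row B = n" "dim_col B = n" using B by auto
  have "B * evalL B (c # cs) = c \<cdot>\<^sub>m B + B * (B * evalL B cs)"
    using d by (simp add: malg)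
  also have "\<dots> = c \<cdot>\<^sub>m B + B * (evalL B cs * B)" using Cons by simp
  also have "\<dots> = evalL B (c # cs) * B" using d by (simp add: malg)
  finally show ?case .
qed

lemma evalL_sym: assumes B: "B \<in> carrier_mat n n" and s: "transpose_mat B = B"
  shows "transpose_mat (evalL B cs) = evalL B cs"
proof (induct cs)
  case Nil
  then show ?case using B by auto
next
  case (Cons c cs)
  have d: "dim_row B = n" "dim_col B = n" using B by auto
  have "transpose_mat (evalL B (c # cs)) = c \<cdot>\<^sub>m 1\<^sub>m n + transpose_mat (evalL B cs) * transpose_mat B"
    using d by (simp add: transpose_add' transpose_mult' transpose_smult)
  also have "\<dots> = c \<cdot>\<^sub>m 1\<^sub>m n + evalL B cs * B" using Cons s by simp
  also have "\<dots> = evalL B (c # cs)" using evalL_comm[OF B, of cs] d by simp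
  finally show ?case .
qed

lemma pow_comm: assumes B: "B \<in> carrier_mat n n"
  shows "B * (B ^\<^sub>m k) = B ^\<^sub>m (Suc k)"
proof (induct k)
  case 0
  then show ?case using B by auto
next
  case (Suc k)
  have "B * (B ^\<^sub>m Suc k) = (B * B ^\<^sub>m k) * B" using B by (simp add: assoc')
  also have "\<dots> = B ^\<^sub>m Suc (Suc k)" using Suc by simp
  finally show ?case .
qed

lemma evalL_entry: assumes B: "B \<in> carrier_mat n n" and i: "i < n" and j: "j < n"
  shows "evalL B cs $$ (i,j) = (\<Sum>k<length cs. cs ! k * (B ^\<^sub>m k) $$ (i,j))"
  using i j
proof (induct cs arbitrary: i j)
  case Nil
  then show ?case using B by auto
next
  case (Cons c cs)
  have d: "dim_row B = n" "dim_col B = n" using B by auto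
  have "(B * evalL B cs) $$ (i,j) = (\<Sum>l = 0..<n. B $$ (i,l) * evalL B cs $$ (l,j))"
    using Cons(2,3) d by (simp add: scalar_prod_def)
  also have "\<dots> = (\<Sum>l = 0..<n. B $$ (i,l) * (\<Sum>k<length cs. cs ! k * (B ^\<^sub>m k) $$ (l,j)))"
    using Cons by simp
  also have "\<dots> = (\<Sum>k<length cs. cs ! k * (\<Sum>l = 0..<n. B $$ (i,l) * (B ^\<^sub>m k) $$ (l,j)))"
    by (simp add: sum_distrib_left sum.swap[of _ "{0..<n}"] ac_simps)
  also have "\<dots> = (\<Sum>k<length cs. cs ! k * (B * B ^\<^sub>m k) $$ (i,j))"
    using Cons(2,3) d by (simp add: scalar_prod_def pow_mat_dim_square[OF B])
  also have "\<dots> = (\<Sum>k<length cs. cs ! k * (B ^\<^sub>m Suc k) $$ (i,j))"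
    using pow_comm[OF B] by simp
  finally have e: "(B * evalL B cs) $$ (i,j) = (\<Sum>k<length cs. cs ! k * (B ^\<^sub>m Suc k) $$ (i,j))" .
  have "evalL B (c # cs) $$ (i,j) = c * (1\<^sub>m n) $$ (i,j) + (B * evalL B cs) $$ (i,j)"
    using Cons(2,3) d by simp
  also have "\<dots> = (\<Sum>k<length (c # cs). (c # cs) ! k * (B ^\<^sub>m k) $$ (i,j))"
    unfolding e length_Cons sum.lessThan_Suc_shift nth_Cons_0 nth_Cons_Suc using d by simp
  finally show ?case .
qed

lemma evalL_rep0: assumes B: "B \<in> carrier_mat n n"
  shows "evalL B (replicate k 0 @ xs) = B ^\<^sub>m k * evalL B xs"
proof (induct k)
  case 0
  then show ?case using B by simp
next
  case (Suc k)
  have d: "dim_row B = n" "dim_col B = n" using B by auto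
  have "evalL B (replicate (Suc k) 0 @ xs) = B * evalL B (replicate k 0 @ xs)"
    using d by simp
  also have "\<dots> = (B * B ^\<^sub>m k) * evalL B xs" using Suc d by (simp add: assoc' pow_mat_dim_square[OF B])
  also have "\<dots> = B ^\<^sub>m Suc k * evalL B xs" using pow_comm[OF B] by simp
  finally show ?case .
qed

lemma annihilator: assumes B: "B \<in> carrier_mat n n"
  shows "\<exists>cs. evalL B cs = 0\<^sub>m n n \<and> (\<exists>x\<in>set cs. x \<noteq> 0)"
proof -
  define N where "N = n * n"
  define K where "K = mat (N+2) (N+2) (\<lambda>(r,k). if r < N then (B ^\<^sub>m k) $$ (r div n, r mod n) else (0::real))"
  have K: "K \<in> carrier_mat (N+2) (N+2)" unfolding K_def by auto
  have "det K = 0"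
  proof -
    have "row K N = row K (N+1)" by (rule eq_vecI, auto simp: K_def)
    from det_identical_rows[OF K _ _ _ this] show ?thesis by auto
  qed
  then obtain v where v: "v \<in> carrier_vec (N+2)" and v0: "v \<noteq> 0\<^sub>v (N+2)" and Kv: "K *\<^sub>v v = 0\<^sub>v (N+2)"
    using det_0_iff_vec_prod_zero_field[OF K] by auto
  define cs where "cs = list_of_vec v"
  have len: "length cs = N + 2" using v unfolding cs_def by auto
  have csk: "\<And>k. k < N + 2 \<Longrightarrow> cs ! k = v $ k" unfolding cs_def using v by auto
  have "evalL B cs = 0\<^sub>m n n"
  proof (rule eq_matI)
    fix i j assume "i < dim_row (0\<^sub>m n n :: real mat)" "j < dim_col (0\<^sub>m n n :: real mat)"
    hence i: "i < n" and j: "j < n" by auto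
    define r where "r = i * n + j"
    have rN: "r < N"
    proof -
      have "i * n + j < (i + 1) * n" using j by simp
      also have "\<dots> \<le> n * n" using i by (intro mult_le_mono1, simp)
      finally show ?thesis unfolding r_def N_def .
    qed
    have rdiv: "r div n = i" "r mod n = j" unfolding r_def using j by auto
    have "0 = (K *\<^sub>v v) $ r" using Kv rN by simp
    also have "\<dots> = row K r \<bullet> v" using rN K by simp
    also have "\<dots> = (\<Sum>k = 0..<N+2. K $$ (r,k) * v $ k)"
      using rN v K unfolding scalar_prod_def by (intro sum.cong, auto)
    also have "\<dots> = (\<Sum>k = 0..<N+2. (B ^\<^sub>m k) $$ (i, j) * v $ k)"
      using rN rdiv by (intro sum.cong, auto simp: K_def)
    also have "\<dots> = (\<Sum>k<length cs. cs ! k * (B ^\<^sub>m k) $$ (i,j))"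
      using len csk by (auto simp: atLeast0LessThan intro!: sum.cong)
    also have "\<dots> = evalL B cs $$ (i,j)" using evalL_entry[OF B i j] by simp
    finally show "evalL B cs $$ (i,j) = (0\<^sub>m n n :: real mat) $$ (i,j)" using i j by simp
  qed (insert B, auto)
  moreover have "\<exists>x\<in>set cs. x \<noteq> 0"
  proof -
    from v0 v obtain k where k: "k < N + 2" "v $ k \<noteq> 0" by (auto simp: vec_eq_iff)
    thus ?thesis using csk len by (metis nth_mem)
  qed
  ultimately show ?thesis by blast
qed

lemma sym_kernel: fixes B X :: "real mat" assumes B: "B \<in> carrier_mat n n" and s: "transpose_mat B = B"
  and X: "X \<in> carrier_mat n p" and z: "B ^\<^sub>m (Suc k) * X = 0\<^sub>m n p"
  shows "B * X = 0\<^sub>m n p"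
  using X z
proof (induct k arbitrary: X)
  case 0
  then show ?case using B by simp
next
  case (Suc k)
  have d: "dim_row B = n" "dim_col B = n" using B by auto
  have "B ^\<^sub>m (Suc (Suc k)) * X = B ^\<^sub>m (Suc k) * (B * X)"
    using Suc(2) d by (simp add: assoc' pow_mat_dim_square[OF B])
  hence "B ^\<^sub>m (Suc k) * (B * X) = 0\<^sub>m n p" using Suc by simp
  hence BBX: "B * (B * X) = 0\<^sub>m n p" using Suc(1)[of "B * X"] Suc(2) B by auto
  have "transpose_mat (B * X) * (B * X) = transpose_mat X * (B * (B * X))"
  proof -
    have dX: "dim_row X = n" "dim_col X = p" using Suc(2) by auto
    show ?thesis using dX d s by (simp add: transpose_mult' assoc')
  qed
  also have "\<dots> = 0\<^sub>m p p" using BBX Suc(2) by simp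
  finally show ?case using tt_zero[of "B * X" n p] Suc(2) B by auto
qed

lemma group_inverse: fixes B :: "real mat" assumes B: "B \<in> carrier_mat n n" and s: "transpose_mat B = B"
  shows "\<exists>G. G \<in> carrier_mat n n \<and> transpose_mat G = G \<and> B * G = G * B \<and> B * G * B = B"
proof -
  have d: "dim_row B = n" "dim_col B = n" using B by auto
  from annihilator[OF B] obtain cs where ev: "evalL B cs = 0\<^sub>m n n" and nz: "\<exists>x\<in>set cs. x \<noteq> 0" by auto
  define k where "k = length (takeWhile (\<lambda>x. x = 0) cs)"
  have tw: "takeWhile (\<lambda>x. x = 0) cs = replicate k 0"
  proof -
    have "\<forall>y\<in>set (takeWhile (\<lambda>x. x = 0) cs). y = 0" by (auto dest: set_takeWhileD)
    from replicate_length_same[OF this] show ?thesis unfolding k_def by simp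
  qed
  have "dropWhile (\<lambda>x. x = 0) cs \<noteq> []" using nz by (simp add: dropWhile_eq_Nil_conv)
  then obtain c ds where dw: "dropWhile (\<lambda>x. x = 0) cs = c # ds" by (cases "dropWhile (\<lambda>x. x = 0) cs", auto)
  have c0: "c \<noteq> 0" using hd_dropWhile[of "\<lambda>x. x = 0" cs] dw by fastforce
  have cs: "cs = replicate k 0 @ (c # ds)" using takeWhile_dropWhile_id[of "\<lambda>x. x = 0" cs] tw dw by simp
  define H where "H = evalL B ds"
  have H: "H \<in> carrier_mat n n" unfolding H_def using d by auto
  define F where "F = c \<cdot>\<^sub>m 1\<^sub>m n + B * H"
  have F: "F \<in> carrier_mat n n" unfolding F_def using H B by auto
  have e: "evalL B cs = B ^\<^sub>m k * F"
    using evalL_rep0[OF B, of k "c # ds"] d unfolding F_def H_def by (simp add: cs[symmetric])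
  have "B ^\<^sub>m k * F = 0\<^sub>m n n" using ev e by simp
  hence BF: "B * F = 0\<^sub>m n n"
  proof (cases k)
    case 0
    then show ?thesis using \<open>B ^\<^sub>m k * F = 0\<^sub>m n n\<close> F B by simp
  next
    case (Suc k')
    then show ?thesis using sym_kernel[OF B s F] \<open>B ^\<^sub>m k * F = 0\<^sub>m n n\<close> by simp
  qed
  define G where "G = (- 1 / c) \<cdot>\<^sub>m H"
  have G: "G \<in> carrier_mat n n" unfolding G_def using H by auto
  have HB: "B * H = H * B" unfolding H_def using evalL_comm[OF B] by simp
  have Hs: "transpose_mat H = H" unfolding H_def using evalL_sym[OF B s] by simp
  have "B * F = c \<cdot>\<^sub>m B + B * B * H" unfolding F_def using d H by (simp add: malg)
  hence eq1: "c \<cdot>\<^sub>m B + B * B * H = 0\<^sub>m n n" using BF by simp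
  have BBG: "B * B * G = B"
  proof (rule eq_matI)
    fix i j assume "i < dim_row B" "j < dim_col B"
    hence i: "i < n" and j: "j < n" using d by auto
    from arg_cong[OF eq1, of "\<lambda>M. M $$ (i,j)"] i j d H
    have "c * B $$ (i,j) + (B * B * H) $$ (i,j) = 0" by simp
    moreover have "(B * B * G) $$ (i,j) = (- 1 / c) * (B * B * H) $$ (i,j)"
      unfolding G_def using d H i j by (simp add: mult_smult')
    ultimately have "c * (B * B * G) $$ (i,j) = c * B $$ (i,j)" using c0 by (simp add: field_simps)
    thus "(B * B * G) $$ (i,j) = B $$ (i,j)" using c0 by simp
  qed (insert d G, auto)
  have BG: "B * G = G * B" unfolding G_def using HB d H by (simp add: mult_smult' smult_mult')
  have dG: "dim_row G = n" "dim_col G = n" using G by auto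
  have "B * G * B = B * (G * B)" using d dG by (simp add: assoc')
  also have "\<dots> = B * (B * G)" using BG by simp
  also have "\<dots> = B * B * G" using d dG by (simp add: assoc')
  also have "\<dots> = B" using BBG by simp
  finally have "B * G * B = B" .
  moreover have "transpose_mat G = G" unfolding G_def using Hs by (simp add: transpose_smult)
  ultimately show ?thesis using G BG by blast
qed

lemma mp_exists: "\<exists>X. is_mp_inverse M X"
proof -
  define m where "m = dim_row M"
  define n where "n = dim_col M"
  have M: "M \<in> carrier_mat m n" unfolding m_def n_def by auto
  define B where "B = transpose_mat M * M"
  have B: "B \<in> carrier_mat n n" unfolding B_def using M by auto
  have s: "transpose_mat B = B" unfolding B_def using M by (simp add: transpose_mult')
  from group_inverse[OF B s] obtain G where G: "G \<in> carrier_mat n n" and Gs: "transpose_mat G = G"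
    and BG: "B * G = G * B" and BGB: "B * G * B = B" by auto
  have dM: "dim_row M = m" "dim_col M = n" using M by auto
  have dG: "dim_row G = n" "dim_col G = n" using G by auto
  have dB: "dim_row B = n" "dim_col B = n" using B by auto
  define Z where "Z = M * (G * B) - M"
  have Z: "Z \<in> carrier_mat m n" unfolding Z_def using M G B by auto
  have "transpose_mat Z * Z = (transpose_mat (G * B) - 1\<^sub>m n) * (B * (G * B) - B)"
    unfolding Z_def B_def using dM dG
    by (simp add: transpose_minus' transpose_mult' malg)
  also have "B * (G * B) - B = 0\<^sub>m n n" using BGB dB dG by (simp add: assoc')
  also have "(transpose_mat (G * B) - 1\<^sub>m n) * 0\<^sub>m n n = 0\<^sub>m n n" using dG dB by simp
  finally have "Z = 0\<^sub>m m n" using tt_zero[OF Z] by simp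
  hence Z0: "Z = 0\<^sub>m m n" .
  have MGB: "M * (G * B) = M"
  proof (rule eq_matI)
    fix i j assume ij: "i < dim_row M" "j < dim_col M"
    have "Z $$ (i,j) = 0" using Z0 ij dM by simp
    thus "(M * (G * B)) $$ (i,j) = M $$ (i,j)" unfolding Z_def using ij dG dB dM by simp
  qed (insert dG dB dM, auto)
  define X where "X = G * transpose_mat M"
  have X: "X \<in> carrier_mat n m" unfolding X_def using G M by auto
  have BGM: "B * (G * transpose_mat M) = transpose_mat M"
  proof -
    have "transpose_mat (M * (G * B)) = transpose_mat M" using MGB by simp
    hence "B * (G * transpose_mat M) = transpose_mat M"
      using dM dG dB Gs s by (simp add: transpose_mult' assoc')
    thus ?thesis .
  qed
  have "M * X * M = M * (G * B)" unfolding X_def B_def using dM dG by (simp add: assoc')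
  hence e1: "M * X * M = M" using MGB by simp
  have "X * M * X = G * (B * (G * transpose_mat M))" unfolding X_def B_def using dM dG by (simp add: assoc')
  hence e2: "X * M * X = X" using BGM unfolding X_def by simp
  have e3: "transpose_mat (M * X) = M * X" unfolding X_def using dM dG Gs by (simp add: transpose_mult' assoc')
  have "X * M = G * B" unfolding X_def B_def using dM dG by (simp add: assoc')
  hence e4: "transpose_mat (X * M) = X * M" using BG Gs s dG dB by (simp add: transpose_mult')
  show ?thesis unfolding is_mp_inverse_def using X e1 e2 e3 e4 dM by (intro exI[of _ X], auto)
qed

lemma mp_inv: "is_mp_inverse M (mp_inv M)"
proof -
  obtain X where X: "is_mp_inverse M X" using mp_exists by auto
  have "\<exists>!X. is_mp_inverse M X" using X mp_unique by blast
  thus ?thesis unfolding mp_inv_def by (rule theI')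
qed

lemma mp_invD: assumes "M \<in> carrier_mat m n"
  shows "mp_inv M \<in> carrier_mat n m" "M * mp_inv M * M = M" "mp_inv M * M * mp_inv M = mp_inv M"
    "transpose_mat (M * mp_inv M) = M * mp_inv M" "transpose_mat (mp_inv M * M) = mp_inv M * M"
  using mp_inv[of M] assms unfolding is_mp_inverse_def by auto


lemma mult_entry: assumes "A \<in> carrier_mat r p" "B \<in> carrier_mat p c" "i < r" "k < c"
  shows "(A * B) $$ (i,k) = (\<Sum>j = 0..<p. A $$ (i,j) * B $$ (j,k))"
  using assms by (auto simp: scalar_prod_def intro!: sum.cong)

lemma mv_entry: assumes "A \<in> carrier_mat r p" "v \<in> carrier_vec p" "i < r"
  shows "(A *\<^sub>v v) $ i = (\<Sum>j = 0..<p. A $$ (i,j) * v $ j)"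
  using assms by (auto simp: scalar_prod_def intro!: sum.cong)

lemma nonneg_mult: assumes A: "A \<in> carrier_mat r p" and B: "B \<in> carrier_mat p c"
  and "mat_nonneg A" "mat_nonneg B" shows "mat_nonneg (A * B)"
  unfolding mat_nonneg_def
proof (intro allI impI)
  fix i j assume "i < dim_row (A * B)" "j < dim_col (A * B)"
  hence ij: "i < r" "j < c" using A B by auto
  show "0 \<le> (A * B) $$ (i, j)" unfolding mult_entry[OF A B ij]
    using assms ij unfolding mat_nonneg_def by (auto intro!: sum_nonneg)
qed

lemma nonneg_pow: assumes A: "A \<in> carrier_mat k k" and "mat_nonneg A" shows "mat_nonneg (A ^\<^sub>m j)"
proof (induct j)
  case 0
  then show ?case unfolding mat_nonneg_def using A by auto
next
  case (Suc j)
  then show ?case using nonneg_mult[of "A ^\<^sub>m j" k k A k] assms by auto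
qed

lemma smult_mat_vec: "dim_vec v = dim_col A \<Longrightarrow> (a \<cdot>\<^sub>m (A :: 'a :: comm_ring mat)) *\<^sub>v v = a \<cdot>\<^sub>v (A *\<^sub>v v)"
  by (rule eq_vecI, auto simp: scalar_prod_def sum_distrib_left ac_simps intro!: sum.cong)

lemma spec_ge:
  fixes W :: "real mat" and u :: "real vec"
  assumes W: "W \<in> carrier_mat k k" and nW: "mat_nonneg W"
    and u: "u \<in> carrier_vec k" and u0: "\<And>i. i < k \<Longrightarrow> u $ i \<ge> 0"
    and upos: "i0 < k" "u $ i0 > 0" and r: "r \<ge> 0"
    and Wu: "\<And>i. i < k \<Longrightarrow> (W *\<^sub>v u) $ i \<ge> r * u $ i"
  shows "r \<le> rspectral_radius W"
proof (rule ccontr)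
  assume "\<not> ?thesis"
  hence lt: "rspectral_radius W < r" by simp
  define Wc where "Wc = map_mat complex_of_real W"
  have Wc: "Wc \<in> carrier_mat k k" unfolding Wc_def using W by auto
  have k0: "k > 0" using upos by auto
  define rh where "rh = spectral_radius Wc"
  have rh: "rh = rspectral_radius W" unfolding rh_def Wc_def rspectral_radius_def by simp
  have rh0: "rh \<ge> 0" using spectral_radius_mem_max(1)[OF Wc k0] unfolding rh_def by auto
  define t where "t = (rh + r) / 2"
  have t: "rh < t" "t < r" "t > 0" using lt rh0 rh unfolding t_def by auto
  define M where "M = (1 / t) \<cdot>\<^sub>m W"
  have M: "M \<in> carrier_mat k k" unfolding M_def using W by auto
  define Mc where "Mc = map_mat complex_of_real M"
  have Mc: "Mc \<in> carrier_mat k k" unfolding Mc_def using M by auto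
  have McWc: "Mc = complex_of_real (1 / t) \<cdot>\<^sub>m Wc" unfolding Mc_def Wc_def M_def
    by (rule eq_matI, auto)
  have "spectral_radius Mc < 1"
  proof -
    from spectral_radius_mem_max(1)[OF Mc k0] obtain lam where lam: "lam \<in> spectrum Mc"
      and eq: "spectral_radius Mc = cmod lam" by auto
    from lam obtain v where ev: "eigenvector Mc v lam" unfolding spectrum_def eigenvalue_def by auto
    hence v: "v \<in> carrier_vec k" "v \<noteq> 0\<^sub>v k" "Mc *\<^sub>v v = lam \<cdot>\<^sub>v v"
      unfolding eigenvector_def using Mc by auto
    have "Wc *\<^sub>v v = (complex_of_real t * lam) \<cdot>\<^sub>v v"
    proof -
      have "Wc = complex_of_real t \<cdot>\<^sub>m Mc" unfolding McWc using t(3)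
        by (intro eq_matI, auto)
      hence "Wc *\<^sub>v v = complex_of_real t \<cdot>\<^sub>v (Mc *\<^sub>v v)" using v Mc by (simp add: smult_mat_vec)
      also have "\<dots> = (complex_of_real t * lam) \<cdot>\<^sub>v v" using v by (simp add: smult_smult_assoc)
      finally show ?thesis .
    qed
    hence "eigenvalue Wc (complex_of_real t * lam)" unfolding eigenvalue_def eigenvector_def
      using v Wc by auto
    hence "cmod (complex_of_real t * lam) \<le> rh" unfolding rh_def
      using spectral_radius_mem_max(2)[OF Wc k0] unfolding spectrum_def by auto
    hence "t * cmod lam \<le> rh" using t by (simp add: norm_mult)
    hence "t * cmod lam < t * 1" using t by linarith
    hence "cmod lam < 1" using t(3) by (simp only: mult_less_cancel_left_pos)
    thus ?thesis using eq by simp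
  qed
  from spectral_radius_jnf_norm_bound_less_1_upper_triangular[OF Mc this]
  obtain c where c: "\<And>j. norm_bound (Mc ^\<^sub>m j) c" by auto
  have bound: "\<And>j a b. a < k \<Longrightarrow> b < k \<Longrightarrow> \<bar>(M ^\<^sub>m j) $$ (a,b)\<bar> \<le> c"
  proof -
    fix j a b assume ab: "a < k" "b < k"
    have "Mc ^\<^sub>m j = map_mat complex_of_real (M ^\<^sub>m j)" unfolding Mc_def
      by (rule sym, rule of_real_hom.mat_hom_pow[OF M])
    moreover have "dim_row (Mc ^\<^sub>m j) = k" "dim_col (Mc ^\<^sub>m j) = k"
      using pow_mat_dim_square[OF Mc] by auto
    moreover have "norm ((Mc ^\<^sub>m j) $$ (a,b)) \<le> c" if "dim_row (Mc ^\<^sub>m j) = k" "dim_col (Mc ^\<^sub>m j) = k"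
      using c[of j] ab that unfolding norm_bound_def by auto
    ultimately have "norm ((map_mat complex_of_real (M ^\<^sub>m j)) $$ (a,b)) \<le> c" by simp
    thus "\<bar>(M ^\<^sub>m j) $$ (a,b)\<bar> \<le> c" using ab M by (simp add: pow_mat_dim_square[OF M])
  qed
  have nM: "mat_nonneg M" using nW t unfolding M_def mat_nonneg_def by auto
  have Mu: "\<And>i. i < k \<Longrightarrow> (M *\<^sub>v u) $ i \<ge> (r / t) * u $ i"
  proof -
    fix i assume i: "i < k"
    have "(M *\<^sub>v u) $ i = (1 / t) * (W *\<^sub>v u) $ i"
      unfolding M_def using i W u by (simp add: mv_entry sum_distrib_left ac_simps)
    thus "(M *\<^sub>v u) $ i \<ge> (r / t) * u $ i" using Wu[OF i] t
      by (simp add: divide_right_mono)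
  qed
  have mono: "\<And>(A :: real mat) (x :: real vec) y i. A \<in> carrier_mat k k \<Longrightarrow> mat_nonneg A \<Longrightarrow> x \<in> carrier_vec k \<Longrightarrow> y \<in> carrier_vec k
     \<Longrightarrow> (\<And>j. j < k \<Longrightarrow> x $ j \<le> y $ j) \<Longrightarrow> i < k \<Longrightarrow> (A *\<^sub>v x) $ i \<le> (A *\<^sub>v y) $ i"
  proof -
    fix A :: "real mat" and x y :: "real vec" and i assume A: "A \<in> carrier_mat k k" and nA: "mat_nonneg A" and x: "x \<in> carrier_vec k"
      and y: "y \<in> carrier_vec k" and xy: "\<And>j. j < k \<Longrightarrow> x $ j \<le> y $ j" and i: "i < k"
    show "(A *\<^sub>v x) $ i \<le> (A *\<^sub>v y) $ i" unfolding mv_entry[OF A x i] mv_entry[OF A y i]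
    proof (rule sum_mono)
      fix j assume "j \<in> {0..<k}"
      hence j: "j < k" by auto
      have "A $$ (i,j) \<ge> 0" using nA A i j unfolding mat_nonneg_def by auto
      thus "A $$ (i, j) * x $ j \<le> A $$ (i, j) * y $ j" using xy[OF j] by (rule mult_left_mono[rotated])
    qed
  qed
  have grow: "\<And>j i. i < k \<Longrightarrow> (M ^\<^sub>m j *\<^sub>v u) $ i \<ge> (r / t) ^ j * u $ i"
  proof -
    fix j
    show "\<And>i. i < k \<Longrightarrow> (M ^\<^sub>m j *\<^sub>v u) $ i \<ge> (r / t) ^ j * u $ i"
    proof (induct j)
      case 0
      then show ?case using u M by auto
    next
      case (Suc j)
      have Mj: "M ^\<^sub>m j \<in> carrier_mat k k" using M by auto
      have "(r / t) * ((r / t) ^ j * u $ i) \<le> (r / t) * (M ^\<^sub>m j *\<^sub>v u) $ i"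
        using Suc t r by (intro mult_left_mono, auto)
      also have "\<dots> = (M ^\<^sub>m j *\<^sub>v ((r / t) \<cdot>\<^sub>v u)) $ i"
        using Mj u Suc(2) by (simp add: mv_entry sum_distrib_left ac_simps)
      also have "\<dots> \<le> (M ^\<^sub>m j *\<^sub>v (M *\<^sub>v u)) $ i"
        by (rule mono[OF Mj nonneg_pow[OF M nM]], insert u M Suc(2) Mu, auto)
      also have "\<dots> = (M ^\<^sub>m Suc j *\<^sub>v u) $ i"
        using M u Mj by (simp add: assoc_mult_mat_vec[OF Mj M u])
      finally show ?case by (simp add: ac_simps)
    qed
  qed
  define C where "C = c * (\<Sum>b = 0..<k. u $ b)"
  have "\<And>j. (r / t) ^ j * u $ i0 \<le> C"
  proof -
    fix j
    have "(r / t) ^ j * u $ i0 \<le> (M ^\<^sub>m j *\<^sub>v u) $ i0" using grow upos by auto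
    also have "\<dots> = (\<Sum>b = 0..<k. (M ^\<^sub>m j) $$ (i0,b) * u $ b)"
      using mv_entry[of "M ^\<^sub>m j" k k u i0] M u upos by simp
    also have "\<dots> \<le> (\<Sum>b = 0..<k. c * u $ b)"
    proof (rule sum_mono)
      fix b assume "b \<in> {0..<k}"
      hence b: "b < k" by auto
      have "(M ^\<^sub>m j) $$ (i0,b) \<le> c" using bound[OF upos(1) b, of j] by linarith
      thus "(M ^\<^sub>m j) $$ (i0,b) * u $ b \<le> c * u $ b" using u0[OF b] by (rule mult_right_mono)
    qed
    also have "\<dots> = C" unfolding C_def by (simp add: sum_distrib_left)
    finally show "(r / t) ^ j * u $ i0 \<le> C" .
  qed
  moreover have "1 < r / t" using t by simp
  from real_arch_pow[OF this, of "C / u $ i0"] obtain j where "C / u $ i0 < (r / t) ^ j" by auto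
  hence "C < (r / t) ^ j * u $ i0" using upos by (simp add: divide_less_eq)
  ultimately show False by (meson not_le)
qed

lemma split_sum: fixes n :: nat shows "(\<Sum>i = 0..<n+n. f i) = (\<Sum>i = 0..<n. f i) + (\<Sum>i = 0..<n. f (n + i))"
proof -
  have "(\<Sum>i = 0..<n+n. f i) = (\<Sum>i = 0..<n. f i) + (\<Sum>i = n..<n+n. f i)"
    using sum.atLeastLessThan_concat[of 0 n "n+n" f] by simp
  also have "(\<Sum>i = n..<n+n. f i) = (\<Sum>i = 0..<n. f (n + i))"
    using sum.shift_bounds_nat_ivl[of f 0 n n] by (simp add: ac_simps)
  finally show ?thesis .
qed

lemma spec_lt1:
  fixes Y X R S :: "real mat" and mu :: complex
  assumes Y: "Y \<in> carrier_mat n m" and X: "X \<in> carrier_mat n m"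
    and R: "R \<in> carrier_mat m n" and S: "S \<in> carrier_mat m n"
    and nY: "mat_nonneg Y" and nX: "mat_nonneg X"
    and nT1: "mat_nonneg (Y * R)" and nT2: "mat_nonneg (Y * S)"
    and iden: "Y * R * X + Y * S * X = X - Y"
    and ev: "mu \<in> spectrum (map_mat complex_of_real (four_block_mat (Y * R) (Y * S) (1\<^sub>m n) (0\<^sub>m n n)))"
  shows "cmod mu < 1"
proof (rule ccontr)
  assume "\<not> cmod mu < 1"
  hence s1: "cmod mu \<ge> 1" by simp
  define s where "s = cmod mu"
  have s: "s \<ge> 1" "s > 0" using s1 unfolding s_def by auto
  define T1 where "T1 = Y * R"
  define T2 where "T2 = Y * S"
  have T1: "T1 \<in> carrier_mat n n" and T2: "T2 \<in> carrier_mat n n" unfolding T1_def T2_def using Y R S by auto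
  define W where "W = four_block_mat T1 T2 (1\<^sub>m n) (0\<^sub>m n n)"
  have W: "W \<in> carrier_mat (n+n) (n+n)" unfolding W_def using T1 T2 by auto
  define Wc where "Wc = map_mat complex_of_real W"
  have Wc: "Wc \<in> carrier_mat (n+n) (n+n)" unfolding Wc_def using W by auto
  have WcT: "transpose_mat Wc \<in> carrier_mat (n+n) (n+n)" using Wc by auto
  have "eigenvalue Wc mu" using ev unfolding spectrum_def Wc_def W_def T1_def T2_def by auto
  hence "eigenvalue (transpose_mat Wc) mu"
    unfolding eigenvalue_root_char_poly[OF Wc] eigenvalue_root_char_poly[OF WcT]
      char_poly_transpose_mat[OF Wc] .
  then obtain z where "eigenvector (transpose_mat Wc) z mu" unfolding eigenvalue_def by auto
  hence z: "z \<in> carrier_vec (n+n)" and z0: "z \<noteq> 0\<^sub>v (n+n)" and zeq: "transpose_mat Wc *\<^sub>v z = mu \<cdot>\<^sub>v z"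
    unfolding eigenvector_def using WcT by auto
  have Went: "\<And>i j. i < n \<Longrightarrow> j < n \<Longrightarrow> W $$ (i,j) = T1 $$ (i,j) \<and> W $$ (i, n + j) = T2 $$ (i,j)
     \<and> W $$ (n + i, j) = (if i = j then 1 else 0) \<and> W $$ (n + i, n + j) = 0"
    unfolding W_def using T1 T2 by auto
  have col: "\<And>j. j < n + n \<Longrightarrow> (\<Sum>i = 0..<n+n. complex_of_real (W $$ (i,j)) * z $ i) = mu * z $ j"
  proof -
    fix j assume j: "j < n + n"
    have "(transpose_mat Wc *\<^sub>v z) $ j = mu * z $ j" using zeq z j by simp
    moreover have "(transpose_mat Wc *\<^sub>v z) $ j = (\<Sum>i = 0..<n+n. transpose_mat Wc $$ (j,i) * z $ i)"
      using mv_entry[OF WcT z j] .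
    moreover have "(\<Sum>i = 0..<n+n. transpose_mat Wc $$ (j,i) * z $ i) = (\<Sum>i = 0..<n+n. complex_of_real (W $$ (i,j)) * z $ i)"
      using j W unfolding Wc_def by (intro sum.cong, auto)
    ultimately show "(\<Sum>i = 0..<n+n. complex_of_real (W $$ (i,j)) * z $ i) = mu * z $ j" by simp
  qed
  define u where "u = (\<lambda>i. cmod (z $ i))"
  define v where "v = (\<lambda>i. cmod (z $ (n + i)))"
  have nT1': "\<And>i j. i < n \<Longrightarrow> j < n \<Longrightarrow> T1 $$ (i,j) \<ge> 0" using nT1 T1 unfolding T1_def mat_nonneg_def by (auto simp del: index_mult_mat)
  have nT2': "\<And>i j. i < n \<Longrightarrow> j < n \<Longrightarrow> T2 $$ (i,j) \<ge> 0" using nT2 T2 unfolding T2_def mat_nonneg_def by (auto simp del: index_mult_mat)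
  define a where "a = (\<lambda>j. \<Sum>i = 0..<n. T1 $$ (i,j) * u i)"
  define b where "b = (\<lambda>j. \<Sum>i = 0..<n. T2 $$ (i,j) * u i)"
  have ineq1: "\<And>j. j < n \<Longrightarrow> s * u j \<le> a j + v j"
  proof -
    fix j assume j: "j < n"
    have "mu * z $ j = (\<Sum>i = 0..<n. complex_of_real (T1 $$ (i,j)) * z $ i) + z $ (n + j)"
    proof -
      have "mu * z $ j = (\<Sum>i = 0..<n+n. complex_of_real (W $$ (i,j)) * z $ i)" using col[of j] j by simp
      also have "\<dots> = (\<Sum>i = 0..<n. complex_of_real (W $$ (i,j)) * z $ i) + (\<Sum>i = 0..<n. complex_of_real (W $$ (n + i,j)) * z $ (n + i))"
        by (rule split_sum)
      also have "(\<Sum>i = 0..<n. complex_of_real (W $$ (i,j)) * z $ i) = (\<Sum>i = 0..<n. complex_of_real (T1 $$ (i,j)) * z $ i)"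
        using Went j by (intro sum.cong, auto)
      also have "(\<Sum>i = 0..<n. complex_of_real (W $$ (n + i,j)) * z $ (n + i)) = (\<Sum>i = 0..<n. (if i = j then z $ (n + i) else 0))"
        using Went j by (intro sum.cong, auto)
      also have "\<dots> = z $ (n + j)" using j by simp
      finally show ?thesis .
    qed
    hence "s * u j = cmod ((\<Sum>i = 0..<n. complex_of_real (T1 $$ (i,j)) * z $ i) + z $ (n + j))"
      unfolding s_def u_def by (metis norm_mult)
    also have "\<dots> \<le> cmod (\<Sum>i = 0..<n. complex_of_real (T1 $$ (i,j)) * z $ i) + v j"
      unfolding v_def by (rule norm_triangle_ineq)
    also have "cmod (\<Sum>i = 0..<n. complex_of_real (T1 $$ (i,j)) * z $ i) \<le> (\<Sum>i = 0..<n. cmod (complex_of_real (T1 $$ (i,j)) * z $ i))"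
      by (rule norm_sum)
    also have "\<dots> = a j" unfolding a_def u_def using nT1' j by (intro sum.cong, auto simp: norm_mult)
    finally show "s * u j \<le> a j + v j" by simp
  qed
  have ineq2: "\<And>j. j < n \<Longrightarrow> s * v j \<le> b j"
  proof -
    fix j assume j: "j < n"
    have "mu * z $ (n + j) = (\<Sum>i = 0..<n. complex_of_real (T2 $$ (i,j)) * z $ i)"
    proof -
      have "mu * z $ (n + j) = (\<Sum>i = 0..<n+n. complex_of_real (W $$ (i,n + j)) * z $ i)" using col[of "n + j"] j by simp
      also have "\<dots> = (\<Sum>i = 0..<n. complex_of_real (W $$ (i,n + j)) * z $ i) + (\<Sum>i = 0..<n. complex_of_real (W $$ (n + i,n + j)) * z $ (n + i))"
        by (rule split_sum)
      also have "(\<Sum>i = 0..<n. complex_of_real (W $$ (i,n + j)) * z $ i) = (\<Sum>i = 0..<n. complex_of_real (T2 $$ (i,j)) * z $ i)"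
        using Went j by (intro sum.cong, auto)
      also have "(\<Sum>i = 0..<n. complex_of_real (W $$ (n + i,n + j)) * z $ (n + i)) = 0"
        using Went j by (intro sum.neutral, auto)
      finally show ?thesis by simp
    qed
    hence "s * v j = cmod (\<Sum>i = 0..<n. complex_of_real (T2 $$ (i,j)) * z $ i)"
      unfolding s_def v_def by (metis norm_mult)
    also have "\<dots> \<le> (\<Sum>i = 0..<n. cmod (complex_of_real (T2 $$ (i,j)) * z $ i))"
      by (rule norm_sum)
    also have "\<dots> = b j" unfolding b_def u_def using nT2' j by (intro sum.cong, auto simp: norm_mult)
    finally show "s * v j \<le> b j" .
  qed
  have u0: "\<And>i. u i \<ge> 0" unfolding u_def by auto
  have v0: "\<And>i. v i \<ge> 0" unfolding v_def by auto
  have T2X: "T2 * X \<in> carrier_mat n m" using T2 X by auto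
  have nT2X: "mat_nonneg (T2 * X)" using nonneg_mult[OF T2 X] nT2 nX unfolding T2_def by auto
  have Xe: "\<And>i k. i < n \<Longrightarrow> k < m \<Longrightarrow> X $$ (i,k) \<ge> 0" using nX X unfolding mat_nonneg_def by auto
  have Ye: "\<And>i k. i < n \<Longrightarrow> k < m \<Longrightarrow> Y $$ (i,k) \<ge> 0" using nY Y unfolding mat_nonneg_def by auto
  have T2Xe: "\<And>i k. i < n \<Longrightarrow> k < m \<Longrightarrow> (T2 * X) $$ (i,k) \<ge> 0" using nT2X T2X unfolding mat_nonneg_def by (auto simp del: index_mult_mat)
  have idene: "\<And>i k. i < n \<Longrightarrow> k < m \<Longrightarrow> (T1 * X) $$ (i,k) = X $$ (i,k) - Y $$ (i,k) - (T2 * X) $$ (i,k)"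
  proof -
    fix i k assume ik: "i < n" "k < m"
    from arg_cong[OF iden, of "\<lambda>M. M $$ (i,k)"] ik Y X R S
    show "(T1 * X) $$ (i,k) = X $$ (i,k) - Y $$ (i,k) - (T2 * X) $$ (i,k)"
      unfolding T1_def T2_def by simp
  qed
  have beta0: "\<And>k. k < m \<Longrightarrow> (\<Sum>i = 0..<n. u i * Y $$ (i,k)) = 0"
  proof -
    fix k assume k: "k < m"
    define al where "al = (\<Sum>i = 0..<n. u i * X $$ (i,k))"
    define be where "be = (\<Sum>i = 0..<n. u i * Y $$ (i,k))"
    define ga where "ga = (\<Sum>i = 0..<n. u i * (T2 * X) $$ (i,k))"
    have al0: "al \<ge> 0" unfolding al_def using u0 Xe k by (auto intro!: sum_nonneg)
    have be0: "be \<ge> 0" unfolding be_def using u0 Ye k by (auto intro!: sum_nonneg)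
    have ga0: "ga \<ge> 0" unfolding ga_def using u0 T2Xe k by (auto intro!: sum_nonneg)
    have sumA: "(\<Sum>j = 0..<n. a j * X $$ (j,k)) = al - be - ga"
    proof -
      have "(\<Sum>j = 0..<n. a j * X $$ (j,k)) = (\<Sum>i = 0..<n. u i * (\<Sum>j = 0..<n. T1 $$ (i,j) * X $$ (j,k)))"
        unfolding a_def sum_distrib_right by (subst sum.swap) (simp add: sum_distrib_left ac_simps)
      also have "\<dots> = (\<Sum>i = 0..<n. u i * (X $$ (i,k) - Y $$ (i,k) - (T2 * X) $$ (i,k)))"
        using mult_entry[OF T1 X] idene k by (intro sum.cong, auto)
      also have "\<dots> = al - be - ga" unfolding al_def be_def ga_def
        by (simp add: algebra_simps sum_subtractf)
      finally show ?thesis .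
    qed
    have sumB: "(\<Sum>j = 0..<n. b j * X $$ (j,k)) = ga"
    proof -
      have "(\<Sum>j = 0..<n. b j * X $$ (j,k)) = (\<Sum>i = 0..<n. u i * (\<Sum>j = 0..<n. T2 $$ (i,j) * X $$ (j,k)))"
        unfolding b_def sum_distrib_right by (subst sum.swap) (simp add: sum_distrib_left ac_simps)
      also have "\<dots> = ga" unfolding ga_def
        using mult_entry[OF T2 X] k by (intro sum.cong, auto)
      finally show ?thesis .
    qed
    have "s * al = (\<Sum>j = 0..<n. (s * u j) * X $$ (j,k))" unfolding al_def by (simp add: sum_distrib_left ac_simps)
    also have "\<dots> \<le> (\<Sum>j = 0..<n. (a j + b j / s) * X $$ (j,k))"
    proof (rule sum_mono)
      fix j assume "j \<in> {0..<n}"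
      hence j: "j < n" by auto
      have "v j \<le> b j / s" using ineq2[OF j] s by (simp add: field_simps)
      hence "s * u j \<le> a j + b j / s" using ineq1[OF j] by linarith
      thus "(s * u j) * X $$ (j,k) \<le> (a j + b j / s) * X $$ (j,k)" using Xe[OF j k] by (rule mult_right_mono)
    qed
    also have "\<dots> = (\<Sum>j = 0..<n. a j * X $$ (j,k)) + (\<Sum>j = 0..<n. b j * X $$ (j,k)) / s"
      by (simp add: algebra_simps sum.distrib sum_divide_distrib)
    also have "\<dots> = al - be - ga + ga / s" unfolding sumA sumB ..
    finally have main: "s * al \<le> al - be - ga + ga / s" .
    have "ga \<le> ga * s" using ga0 s mult_le_cancel_left1[of ga s] by (simp add: mult_left_le)
    hence "ga / s \<le> ga" using ga0 s by (simp add: divide_le_eq)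
    moreover have "al \<le> s * al" using al0 s by (simp add: mult_le_cancel_right1)
    ultimately have "be \<le> 0" using main by linarith
    thus "(\<Sum>i = 0..<n. u i * Y $$ (i,k)) = 0" using be0 unfolding be_def by linarith
  qed
  have uY: "\<And>i k. i < n \<Longrightarrow> k < m \<Longrightarrow> u i * Y $$ (i,k) = 0"
  proof -
    fix i k assume ik: "i < n" "k < m"
    have "\<forall>i\<in>{0..<n}. u i * Y $$ (i,k) = 0"
      using beta0[OF ik(2)] sum_nonneg_eq_0_iff[of "{0..<n}" "\<lambda>i. u i * Y $$ (i,k)"] u0 Ye ik by auto
    thus "u i * Y $$ (i,k) = 0" using ik by auto
  qed
  have a0: "\<And>j. j < n \<Longrightarrow> a j = 0"
  proof -
    fix j assume j: "j < n"
    have "a j = (\<Sum>i = 0..<n. (\<Sum>k = 0..<m. (u i * Y $$ (i,k)) * R $$ (k,j)))"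
      unfolding a_def T1_def using mult_entry[OF Y R] j
      by (intro sum.cong, auto simp: sum_distrib_left sum_distrib_right ac_simps)
    also have "\<dots> = 0" using uY by (intro sum.neutral ballI, auto)
    finally show "a j = 0" .
  qed
  have b0: "\<And>j. j < n \<Longrightarrow> b j = 0"
  proof -
    fix j assume j: "j < n"
    have "b j = (\<Sum>i = 0..<n. (\<Sum>k = 0..<m. (u i * Y $$ (i,k)) * S $$ (k,j)))"
      unfolding b_def T2_def using mult_entry[OF Y S] j
      by (intro sum.cong, auto simp: sum_distrib_left sum_distrib_right ac_simps)
    also have "\<dots> = 0" using uY by (intro sum.neutral ballI, auto)
    finally show "b j = 0" .
  qed
  have vz: "\<And>j. j < n \<Longrightarrow> v j = 0"
  proof -
    fix j assume j: "j < n"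
    have "s * v j \<le> 0" using ineq2[OF j] b0[OF j] by simp
    hence "v j \<le> 0" using s by (simp add: mult_le_0_iff)
    thus "v j = 0" using v0[of j] by simp
  qed
  have uz: "\<And>j. j < n \<Longrightarrow> u j = 0"
  proof -
    fix j assume j: "j < n"
    have "s * u j \<le> 0" using ineq1[OF j] a0[OF j] vz[OF j] by simp
    hence "u j \<le> 0" using s by (simp add: mult_le_0_iff)
    thus "u j = 0" using u0[of j] by simp
  qed
  have "z = 0\<^sub>v (n+n)"
  proof (rule eq_vecI)
    fix i assume "i < dim_vec (0\<^sub>v (n+n) :: complex vec)"
    hence i: "i < n + n" by simp
    show "z $ i = 0\<^sub>v (n+n) $ i"
    proof (cases "i < n")
      case True
      then show ?thesis using uz[OF True] i unfolding u_def by simp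
    next
      case False
      then obtain j where "i = n + j" "j < n" using i by (metis add_less_cancel_left le_add_diff_inverse not_less)
      then show ?thesis using vz[of j] i unfolding v_def by simp
    qed
  qed (insert z, auto)
  with z0 show False by simp
qed


lemma kern_mat: fixes A B Z :: "real mat"
  assumes A: "A \<in> carrier_mat a b" and B: "B \<in> carrier_mat c b" and Z: "Z \<in> carrier_mat b p"
    and ker: "mat_kernel A \<subseteq> mat_kernel B" and AZ: "A * Z = 0\<^sub>m a p"
  shows "B * Z = 0\<^sub>m c p"
proof (rule eq_matI)
  fix i j assume "i < dim_row (0\<^sub>m c p :: real mat)" "j < dim_col (0\<^sub>m c p :: real mat)"
  hence i: "i < c" and j: "j < p" by auto
  have "A *\<^sub>v col Z j = col (A * Z) j" using col_mult2[OF A Z j] by simp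
  also have "\<dots> = 0\<^sub>v a" using AZ j by auto
  finally have "col Z j \<in> mat_kernel A" using A Z j by (auto intro!: mat_kernelI)
  hence "col Z j \<in> mat_kernel B" using ker by auto
  hence "B *\<^sub>v col Z j = 0\<^sub>v c" using B by (auto dest: mat_kernelD)
  hence "col (B * Z) j = 0\<^sub>v c" using col_mult2[OF B Z j] by simp
  hence "col (B * Z) j $ i = 0" using i by simp
  thus "(B * Z) $$ (i,j) = (0\<^sub>m c p :: real mat) $$ (i,j)" using i j B Z by simp
qed (insert B Z, auto)

lemma range_mat: fixes P Q :: "real mat"
  assumes P: "P \<in> carrier_mat a b" and Q: "Q \<in> carrier_mat a c"
    and rng: "mat_range P \<subseteq> mat_range Q"
  shows "\<exists>Z. Z \<in> carrier_mat c b \<and> P = Q * Z"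
proof -
  have "\<forall>j. \<exists>v. j < b \<longrightarrow> v \<in> carrier_vec c \<and> Q *\<^sub>v v = col P j"
  proof (intro allI)
    fix j
    show "\<exists>v. j < b \<longrightarrow> v \<in> carrier_vec c \<and> Q *\<^sub>v v = col P j"
    proof (cases "j < b")
      case True
      have "col P j = P *\<^sub>v unit_vec b j"
        by (rule eq_vecI, insert P True, auto simp: scalar_prod_right_unit)
      hence "col P j \<in> mat_range P" unfolding mat_range_def using P by auto
      hence "col P j \<in> mat_range Q" using rng by auto
      then show ?thesis unfolding mat_range_def using Q by auto
    qed auto
  qed
  then obtain f where f: "\<And>j. j < b \<Longrightarrow> f j \<in> carrier_vec c \<and> Q *\<^sub>v f j = col P j" by metis
  define Z where "Z = mat c b (\<lambda>(i,j). f j $ i)"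
  have Z: "Z \<in> carrier_mat c b" unfolding Z_def by auto
  have colZ: "\<And>j. j < b \<Longrightarrow> col Z j = f j"
  proof -
    fix j assume j: "j < b"
    have fj: "f j \<in> carrier_vec c" using f[OF j] by simp
    show "col Z j = f j" unfolding Z_def using j fj by (intro eq_vecI, auto)
  qed
  have "P = Q * Z"
  proof (rule eq_matI)
    fix i j assume "i < dim_row (Q * Z)" "j < dim_col (Q * Z)"
    hence i: "i < a" and j: "j < b" using Q Z by auto
    have "(Q * Z) $$ (i,j) = col (Q * Z) j $ i" using i j Q Z by simp
    also have "\<dots> = (Q *\<^sub>v f j) $ i" using col_mult2[OF Q Z j] colZ[OF j] by simp
    also have "\<dots> = P $$ (i,j)" using f[OF j] i j P by simp
    finally show "P $$ (i,j) = (Q * Z) $$ (i,j)" by simp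
  qed (insert P Q Z, auto)
  thus ?thesis using Z by blast
qed

lemma kerfix: fixes P Y B :: "real mat"
  assumes P: "P \<in> carrier_mat a b" and Y: "Y \<in> carrier_mat b a" and B: "B \<in> carrier_mat c b"
    and PYP: "P * Y * P = P" and ker: "mat_kernel P \<subseteq> mat_kernel B"
  shows "B * Y * P = B"
proof -
  have dP: "dim_row P = a" "dim_col P = b" using P by auto
  have dY: "dim_row Y = b" "dim_col Y = a" using Y by auto
  have dB: "dim_row B = c" "dim_col B = b" using B by auto
  define Z where "Z = 1\<^sub>m b - Y * P"
  have Z: "Z \<in> carrier_mat b b" unfolding Z_def using Y P by auto
  have "P * Z = P - P * Y * P" unfolding Z_def using dP dY by (simp add: malg)
  also have "\<dots> = 0\<^sub>m a b" using PYP dP by simp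
  finally have "B * Z = 0\<^sub>m c b" using kern_mat[OF P B Z ker] by simp
  hence e: "B - B * Y * P = 0\<^sub>m c b" unfolding Z_def using dB dY dP by (simp add: malg)
  show ?thesis
  proof (rule eq_matI)
    fix i j assume ij: "i < dim_row B" "j < dim_col B"
    from arg_cong[OF e, of "\<lambda>M. M $$ (i,j)"] ij dB dY dP
    show "(B * Y * P) $$ (i,j) = B $$ (i,j)" by simp
  qed (insert dB dY dP, auto)
qed

lemma mp_ident: fixes P Y Ah X Z :: "real mat"
  assumes P: "P \<in> carrier_mat m n" and Ah: "Ah \<in> carrier_mat m n"
    and Y: "is_mp_inverse P Y" and X: "is_mp_inverse Ah X"
    and ker: "mat_kernel P \<subseteq> mat_kernel Ah"
    and Z: "Z \<in> carrier_mat n n" and PZ: "P = Ah * Z"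
  shows "Y * P * X = X" "Y * Ah * X = Y"
proof -
  from Y P have Yc: "Y \<in> carrier_mat n m" and Y1: "P * Y * P = P" and Y2: "Y * P * Y = Y"
    and Y3: "transpose_mat (P * Y) = P * Y" and Y4: "transpose_mat (Y * P) = Y * P"
    unfolding is_mp_inverse_def by auto
  from X Ah have Xc: "X \<in> carrier_mat n m" and X1: "Ah * X * Ah = Ah" and X2: "X * Ah * X = X"
    and X3: "transpose_mat (Ah * X) = Ah * X" and X4: "transpose_mat (X * Ah) = X * Ah"
    unfolding is_mp_inverse_def by auto
  have d: "dim_row P = m" "dim_col P = n" "dim_row Ah = m" "dim_col Ah = n" "dim_row Y = n" "dim_col Y = m"
    "dim_row X = n" "dim_col X = m" "dim_row Z = n" "dim_col Z = n"
    using P Ah Yc Xc Z by auto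
  have AYP: "Ah * Y * P = Ah" by (rule kerfix[OF P Yc Ah Y1 ker])
  have "X = X * Ah * X" using X2 by simp
  also have "\<dots> = transpose_mat (X * Ah) * X" using X4 by simp
  also have "\<dots> = transpose_mat Ah * (transpose_mat X * X)" using d by (simp add: transpose_mult' assoc')
  finally have eX: "X = transpose_mat Ah * (transpose_mat X * X)" .
  have "Y * P * transpose_mat Ah = transpose_mat (Ah * transpose_mat (Y * P))"
    using d by (simp add: transpose_mult')
  also have "\<dots> = transpose_mat (Ah * Y * P)" using Y4 d by (simp add: assoc')
  also have "\<dots> = transpose_mat Ah" using AYP by simp
  finally have e1: "Y * P * transpose_mat Ah = transpose_mat Ah" .
  have "Y * P * X = (Y * P * transpose_mat Ah) * (transpose_mat X * X)"
    by (subst eX, insert d, simp add: assoc')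
  also have "\<dots> = X" using e1 eX by simp
  finally show "Y * P * X = X" .
  have "Y = Y * (P * Y)" using Y2 d by (simp add: assoc')
  also have "\<dots> = Y * transpose_mat (P * Y)" using Y3 by simp
  also have "\<dots> = Y * transpose_mat Y * transpose_mat P" using d by (simp add: transpose_mult' assoc')
  finally have eY: "Y = Y * transpose_mat Y * transpose_mat P" .
  have AXP: "Ah * X * P = P"
  proof -
    have "Ah * X * P = (Ah * X * Ah) * Z" unfolding PZ using d by (simp add: assoc')
    also have "\<dots> = P" using X1 PZ by simp
    finally show ?thesis .
  qed
  have "transpose_mat P * (Ah * X) = transpose_mat P * transpose_mat (Ah * X)" using X3 by simp
  also have "\<dots> = transpose_mat (Ah * X * P)" using d by (simp add: transpose_mult')
  also have "\<dots> = transpose_mat P" using AXP by simp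
  finally have e2: "transpose_mat P * (Ah * X) = transpose_mat P" .
  have "Y * Ah * X = (Y * transpose_mat Y * transpose_mat P) * (Ah * X)"
    by (subst eY, insert d, simp add: assoc')
  also have "\<dots> = Y * transpose_mat Y * (transpose_mat P * (Ah * X))" using d by (simp add: assoc')
  also have "\<dots> = Y" using e2 eY by simp
  finally show "Y * Ah * X = Y" .
qed

lemma eig_of: fixes M :: "real mat"
  assumes M: "M \<in> carrier_mat m m" and v: "v \<in> carrier_vec m" and v0: "v \<noteq> 0\<^sub>v m"
    and Mv: "M *\<^sub>v v = c \<cdot>\<^sub>v v"
  shows "complex_of_real c \<in> rspectrum M"
proof -
  define w where "w = map_vec complex_of_real v"
  have w: "w \<in> carrier_vec m" unfolding w_def using v by auto
  have w0: "w \<noteq> 0\<^sub>v m"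
  proof
    assume "w = 0\<^sub>v m"
    hence "v = 0\<^sub>v m" unfolding w_def using v by (auto simp: vec_eq_iff)
    with v0 show False by simp
  qed
  have "map_mat complex_of_real M *\<^sub>v w = map_vec complex_of_real (M *\<^sub>v v)"
    unfolding w_def by (rule sym, rule of_real_hom.mult_mat_vec_hom[OF M v])
  also have "\<dots> = complex_of_real c \<cdot>\<^sub>v w" unfolding Mv w_def by (rule eq_vecI, auto)
  finally have "eigenvector (map_mat complex_of_real M) w (complex_of_real c)"
    unfolding eigenvector_def using w w0 M by auto
  thus ?thesis unfolding rspectrum_def spectrum_def eigenvalue_def by auto
qed

lemma inv_exists: fixes K :: "real mat"
  assumes K: "K \<in> carrier_mat m m" and inj: "\<And>v. v \<in> carrier_vec m \<Longrightarrow> K *\<^sub>v v = 0\<^sub>v m \<Longrightarrow> v = 0\<^sub>v m"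
  shows "\<exists>K'. K' \<in> carrier_mat m m \<and> K * K' = 1\<^sub>m m"
proof -
  have "det K \<noteq> 0" using det_0_iff_vec_prod_zero_field[OF K] inj by auto
  from det_non_zero_imp_unit[OF K this]
  have "K \<in> Units (ring_mat TYPE(real) m undefined)" .
  thus ?thesis unfolding Units_def ring_mat_def by auto
qed

lemma range_inv: fixes A P Z1 V K K' :: "real mat"
  assumes A: "A \<in> carrier_mat m n" and P: "P \<in> carrier_mat m n" and Z1: "Z1 \<in> carrier_mat n n"
    and PZ1: "P = A * Z1" and V: "V \<in> carrier_mat n m" and K: "K = 1\<^sub>m m - A * V"
    and K': "K' \<in> carrier_mat m m" and KK': "K * K' = 1\<^sub>m m"
  shows "\<exists>Z. Z \<in> carrier_mat n n \<and> P = (K * A) * Z"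
proof -
  have d: "dim_row A = m" "dim_col A = n" "dim_row P = m" "dim_col P = n" "dim_row Z1 = n" "dim_col Z1 = n"
    "dim_row V = n" "dim_col V = m" "dim_row K' = m" "dim_col K' = m" using A P Z1 V K' by auto
  define W0 where "W0 = K' * P"
  have dW: "dim_row W0 = m" "dim_col W0 = n" unfolding W0_def using d by auto
  have KW: "K * W0 = P" unfolding W0_def using KK' d K by (simp add: assoc'[symmetric])
  have "K * W0 = W0 - A * (V * W0)" unfolding K using d dW by (simp add: malg)
  hence e: "W0 - A * (V * W0) = P" using KW by simp
  define Z where "Z = Z1 + V * W0"
  have Z: "Z \<in> carrier_mat n n" unfolding Z_def using d dW by auto
  have "A * Z = A * Z1 + A * (V * W0)" unfolding Z_def using d dW by (simp add: malg)
  also have "\<dots> = W0"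
  proof (rule eq_matI)
    fix i j assume ij: "i < dim_row W0" "j < dim_col W0"
    from arg_cong[OF e, of "\<lambda>M. M $$ (i,j)"] ij d dW
    show "(A * Z1 + A * (V * W0)) $$ (i,j) = W0 $$ (i,j)" using PZ1 by simp
  qed (insert d dW, auto)
  finally have "A * Z = W0" .
  moreover have "(K * A) * Z = K * (A * Z)"
    by (rule assoc_mult_mat[of _ m m _ n _ n], insert K A Z V, auto)
  ultimately have "(K * A) * Z = P" using KW by simp
  thus ?thesis using Z by metis
qed

lemma ker_KA: fixes A K :: "real mat"
  assumes A: "A \<in> carrier_mat m n" and K: "K \<in> carrier_mat m m"
  shows "mat_kernel A \<subseteq> mat_kernel (K * A)"
proof
  fix v assume "v \<in> mat_kernel A"
  hence v: "v \<in> carrier_vec n" and Av: "A *\<^sub>v v = 0\<^sub>v m" using A by (auto dest: mat_kernelD simp: mat_kernel_def)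
  have "(K * A) *\<^sub>v v = K *\<^sub>v (A *\<^sub>v v)" using K A v by simp
  also have "\<dots> = 0\<^sub>v m" using Av K by (auto intro!: eq_vecI simp: scalar_prod_def)
  finally show "v \<in> mat_kernel (K * A)" using K A v by (auto intro!: mat_kernelI)
qed

lemma sign_nn_np: fixes A B :: "real mat" assumes A: "A \<in> carrier_mat r p" and B: "B \<in> carrier_mat p c"
  and "mat_nonneg A" "mat_nonpos B" shows "mat_nonpos (A * B)"
  unfolding mat_nonpos_def
proof (intro allI impI)
  fix i j assume "i < dim_row (A * B)" "j < dim_col (A * B)"
  hence ij: "i < r" "j < c" using A B by auto
  show "(A * B) $$ (i, j) \<le> 0" unfolding mult_entry[OF A B ij]
    using assms ij unfolding mat_nonneg_def mat_nonpos_def by (auto intro!: sum_nonpos mult_nonneg_nonpos)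
qed

lemma sign_np_nn: fixes A B :: "real mat" assumes A: "A \<in> carrier_mat r p" and B: "B \<in> carrier_mat p c"
  and "mat_nonpos A" "mat_nonneg B" shows "mat_nonpos (A * B)"
  unfolding mat_nonpos_def
proof (intro allI impI)
  fix i j assume "i < dim_row (A * B)" "j < dim_col (A * B)"
  hence ij: "i < r" "j < c" using A B by auto
  show "(A * B) $$ (i, j) \<le> 0" unfolding mult_entry[OF A B ij]
    using assms ij unfolding mat_nonneg_def mat_nonpos_def by (auto intro!: sum_nonpos mult_nonpos_nonneg)
qed

lemma sign_np_np: fixes A B :: "real mat" assumes A: "A \<in> carrier_mat r p" and B: "B \<in> carrier_mat p c"
  and "mat_nonpos A" "mat_nonpos B" shows "mat_nonneg (A * B)"
  unfolding mat_nonneg_def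
proof (intro allI impI)
  fix i j assume "i < dim_row (A * B)" "j < dim_col (A * B)"
  hence ij: "i < r" "j < c" using A B by auto
  show "0 \<le> (A * B) $$ (i, j)" unfolding mult_entry[OF A B ij]
    using assms ij unfolding mat_nonneg_def mat_nonpos_def by (auto intro!: sum_nonneg mult_nonpos_nonpos)
qed

lemma rsr_nonneg: fixes W :: "real mat" assumes W: "W \<in> carrier_mat k k" and k: "k > 0"
  shows "rspectral_radius W \<ge> 0"
proof -
  have "map_mat complex_of_real W \<in> carrier_mat k k" using W by auto
  from spectral_radius_mem_max(1)[OF this k] show ?thesis unfolding rspectral_radius_def by auto
qed

lemma compare:
  fixes B C B' C' :: "real mat"
  assumes B: "B \<in> carrier_mat n n" and C: "C \<in> carrier_mat n n"
    and B': "B' \<in> carrier_mat n n" and C': "C' \<in> carrier_mat n n" and n: "n > 0"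
    and nB: "mat_nonneg B" and nC: "mat_nonneg C" and nB': "mat_nonneg B'" and nC': "mat_nonneg C'"
    and D: "\<And>i j. i < n \<Longrightarrow> j < n \<Longrightarrow> B $$ (i,j) \<le> B' $$ (i,j)"
    and E: "\<And>i j. i < n \<Longrightarrow> j < n \<Longrightarrow> B' $$ (i,j) - B $$ (i,j) \<le> C $$ (i,j) - C' $$ (i,j)"
    and lt: "rspectral_radius (four_block_mat B' C' (1\<^sub>m n) (0\<^sub>m n n)) \<le> 1"
  shows "rspectral_radius (four_block_mat B' C' (1\<^sub>m n) (0\<^sub>m n n))
     \<le> rspectral_radius (four_block_mat B C (1\<^sub>m n) (0\<^sub>m n n))"
proof -
  define W where "W = four_block_mat B C (1\<^sub>m n) (0\<^sub>m n n)"
  define W' where "W' = four_block_mat B' C' (1\<^sub>m n) (0\<^sub>m n n)"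
  have W: "W \<in> carrier_mat (n+n) (n+n)" unfolding W_def using B C by auto
  have W': "W' \<in> carrier_mat (n+n) (n+n)" unfolding W'_def using B' C' by auto
  define Wc' where "Wc' = map_mat complex_of_real W'"
  have Wc': "Wc' \<in> carrier_mat (n+n) (n+n)" unfolding Wc'_def using W' by auto
  define r where "r = rspectral_radius W'"
  have nn: "n + n > 0" using n by simp
  have rW: "r = spectral_radius Wc'" unfolding r_def rspectral_radius_def Wc'_def by (rule refl)
  from spectral_radius_mem_max(1)[OF Wc' nn] obtain mu where mu: "mu \<in> spectrum Wc'"
    and "spectral_radius Wc' = cmod mu" by blast
  hence rmu: "r = cmod mu" using rW by simp
  have r1: "r \<le> 1" using lt unfolding r_def W'_def .
  have r0: "r \<ge> 0" using rmu by simp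
  show ?thesis
  proof (cases "r = 0")
    case True
    then show ?thesis using rsr_nonneg[OF W nn] unfolding r_def W_def W'_def by simp
  next
    case False
    hence rpos: "r > 0" using r0 by simp
    from mu obtain z where "eigenvector Wc' z mu" unfolding spectrum_def eigenvalue_def by auto
    hence z: "z \<in> carrier_vec (n+n)" and z0: "z \<noteq> 0\<^sub>v (n+n)" and zeq: "Wc' *\<^sub>v z = mu \<cdot>\<^sub>v z"
      unfolding eigenvector_def using Wc' by auto
    have Went: "\<And>i j. i < n \<Longrightarrow> j < n \<Longrightarrow> W' $$ (i,j) = B' $$ (i,j) \<and> W' $$ (i, n + j) = C' $$ (i,j)
       \<and> W' $$ (n + i, j) = (if i = j then 1 else 0) \<and> W' $$ (n + i, n + j) = 0"
      unfolding W'_def using B' C' by auto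
    have WentB: "\<And>i j. i < n \<Longrightarrow> j < n \<Longrightarrow> W $$ (i,j) = B $$ (i,j) \<and> W $$ (i, n + j) = C $$ (i,j)
       \<and> W $$ (n + i, j) = (if i = j then 1 else 0) \<and> W $$ (n + i, n + j) = 0"
      unfolding W_def using B C by auto
    have row: "\<And>i. i < n + n \<Longrightarrow> (\<Sum>j = 0..<n+n. complex_of_real (W' $$ (i,j)) * z $ j) = mu * z $ i"
    proof -
      fix i assume i: "i < n + n"
      have "(Wc' *\<^sub>v z) $ i = mu * z $ i" using zeq z i by simp
      moreover have "(Wc' *\<^sub>v z) $ i = (\<Sum>j = 0..<n+n. Wc' $$ (i,j) * z $ j)" using mv_entry[OF Wc' z i] .
      moreover have "(\<Sum>j = 0..<n+n. Wc' $$ (i,j) * z $ j) = (\<Sum>j = 0..<n+n. complex_of_real (W' $$ (i,j)) * z $ j)"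
        using i W' unfolding Wc'_def by (intro sum.cong, auto)
      ultimately show "(\<Sum>j = 0..<n+n. complex_of_real (W' $$ (i,j)) * z $ j) = mu * z $ i" by simp
    qed
    define w where "w = (\<lambda>i. cmod (z $ (n + i)))"
    have w0: "\<And>i. w i \<ge> 0" unfolding w_def by auto
    have low: "\<And>i. i < n \<Longrightarrow> z $ i = mu * z $ (n + i)"
    proof -
      fix i assume i: "i < n"
      have "mu * z $ (n + i) = (\<Sum>j = 0..<n+n. complex_of_real (W' $$ (n + i,j)) * z $ j)" using row[of "n + i"] i by simp
      also have "\<dots> = (\<Sum>j = 0..<n. complex_of_real (W' $$ (n + i,j)) * z $ j) + (\<Sum>j = 0..<n. complex_of_real (W' $$ (n + i,n + j)) * z $ (n + j))"
        by (rule split_sum)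
      also have "(\<Sum>j = 0..<n. complex_of_real (W' $$ (n + i,j)) * z $ j) = (\<Sum>j = 0..<n. (if i = j then z $ j else 0))"
        using Went i by (intro sum.cong, auto)
      also have "\<dots> = z $ i" using i by simp
      also have "(\<Sum>j = 0..<n. complex_of_real (W' $$ (n + i,n + j)) * z $ (n + j)) = 0"
        using Went i by (intro sum.neutral, auto)
      finally show "z $ i = mu * z $ (n + i)" by simp
    qed
    have cz: "\<And>i. i < n \<Longrightarrow> cmod (z $ i) = r * w i" using low rmu unfolding w_def by (simp add: norm_mult)
    have ineq: "\<And>i. i < n \<Longrightarrow> r * (r * w i) \<le> (\<Sum>j = 0..<n. B' $$ (i,j) * (r * w j)) + (\<Sum>j = 0..<n. C' $$ (i,j) * w j)"
    proof -
      fix i assume i: "i < n"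
      have eq: "mu * z $ i = (\<Sum>j = 0..<n. complex_of_real (B' $$ (i,j)) * z $ j) + (\<Sum>j = 0..<n. complex_of_real (C' $$ (i,j)) * z $ (n + j))"
      proof -
        have "mu * z $ i = (\<Sum>j = 0..<n+n. complex_of_real (W' $$ (i,j)) * z $ j)" using row[of i] i by simp
        also have "\<dots> = (\<Sum>j = 0..<n. complex_of_real (W' $$ (i,j)) * z $ j) + (\<Sum>j = 0..<n. complex_of_real (W' $$ (i,n + j)) * z $ (n + j))"
          by (rule split_sum)
        also have "(\<Sum>j = 0..<n. complex_of_real (W' $$ (i,j)) * z $ j) = (\<Sum>j = 0..<n. complex_of_real (B' $$ (i,j)) * z $ j)"
          using Went i by (intro sum.cong, auto)
        also have "(\<Sum>j = 0..<n. complex_of_real (W' $$ (i,n + j)) * z $ (n + j)) = (\<Sum>j = 0..<n. complex_of_real (C' $$ (i,j)) * z $ (n + j))"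
          using Went i by (intro sum.cong, auto)
        finally show ?thesis .
      qed
      have "r * (r * w i) = cmod (mu * z $ i)" using cz[OF i] rmu by (simp add: norm_mult)
      also have "\<dots> \<le> cmod (\<Sum>j = 0..<n. complex_of_real (B' $$ (i,j)) * z $ j) + cmod (\<Sum>j = 0..<n. complex_of_real (C' $$ (i,j)) * z $ (n + j))"
        unfolding eq by (rule norm_triangle_ineq)
      also have "cmod (\<Sum>j = 0..<n. complex_of_real (B' $$ (i,j)) * z $ j) \<le> (\<Sum>j = 0..<n. cmod (complex_of_real (B' $$ (i,j)) * z $ j))"
        by (rule norm_sum)
      also have "\<dots> = (\<Sum>j = 0..<n. B' $$ (i,j) * (r * w j))"
        using nB' B' i cz unfolding mat_nonneg_def by (intro sum.cong, auto simp: norm_mult)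
      also have "cmod (\<Sum>j = 0..<n. complex_of_real (C' $$ (i,j)) * z $ (n + j)) \<le> (\<Sum>j = 0..<n. cmod (complex_of_real (C' $$ (i,j)) * z $ (n + j)))"
        by (rule norm_sum)
      also have "\<dots> = (\<Sum>j = 0..<n. C' $$ (i,j) * w j)"
        using nC' C' i unfolding mat_nonneg_def w_def by (intro sum.cong, auto simp: norm_mult)
      finally show "r * (r * w i) \<le> (\<Sum>j = 0..<n. B' $$ (i,j) * (r * w j)) + (\<Sum>j = 0..<n. C' $$ (i,j) * w j)" by simp
    qed
    obtain i1 where i1: "i1 < n" "w i1 > 0"
    proof (rule ccontr)
      assume "\<not> thesis"
      have wz: "\<And>i. i < n \<Longrightarrow> w i = 0"
      proof -
        fix i assume i: "i < n"
        have "\<not> w i > 0" using that[OF i] \<open>\<not> thesis\<close> by blast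
        thus "w i = 0" using w0[of i] by simp
      qed
      have "z = 0\<^sub>v (n+n)"
      proof (rule eq_vecI)
        fix i assume "i < dim_vec (0\<^sub>v (n+n) :: complex vec)"
        hence i: "i < n + n" by simp
        show "z $ i = 0\<^sub>v (n+n) $ i"
        proof (cases "i < n")
          case True
          then show ?thesis using low[OF True] wz[OF True] i unfolding w_def by simp
        next
          case False
          then obtain j where "i = n + j" "j < n" using i by (metis add_less_cancel_left le_add_diff_inverse not_less)
          then show ?thesis using wz[of j] i unfolding w_def by simp
        qed
      qed (insert z, auto)
      with z0 show False by simp
    qed
    define u where "u = vec (n+n) (\<lambda>i. if i < n then r * w i else w (i - n))"
    have u: "u \<in> carrier_vec (n+n)" unfolding u_def by simp
    have ulo: "\<And>i. i < n \<Longrightarrow> u $ i = r * w i" unfolding u_def by simp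
    have uhi: "\<And>i. i < n \<Longrightarrow> u $ (n + i) = w i" unfolding u_def by simp
    have u0: "\<And>i. i < n + n \<Longrightarrow> u $ i \<ge> 0" unfolding u_def using w0 r0 by simp
    have Wu: "\<And>i. i < n + n \<Longrightarrow> (W *\<^sub>v u) $ i \<ge> r * u $ i"
    proof -
      fix i assume i: "i < n + n"
      have split: "(W *\<^sub>v u) $ i = (\<Sum>j = 0..<n. W $$ (i,j) * u $ j) + (\<Sum>j = 0..<n. W $$ (i,n + j) * u $ (n + j))"
        unfolding mv_entry[OF W u i] by (rule split_sum)
      show "(W *\<^sub>v u) $ i \<ge> r * u $ i"
      proof (cases "i < n")
        case True
        have e1: "(W *\<^sub>v u) $ i = (\<Sum>j = 0..<n. B $$ (i,j) * (r * w j)) + (\<Sum>j = 0..<n. C $$ (i,j) * w j)"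
          unfolding split using WentB True ulo uhi by (intro arg_cong2[where f="(+)"] sum.cong, auto)
        have e2: "(\<Sum>j = 0..<n. B $$ (i,j) * (r * w j)) + (\<Sum>j = 0..<n. C $$ (i,j) * w j) = (\<Sum>j = 0..<n. (r * B $$ (i,j) + C $$ (i,j)) * w j)"
          by (subst sum.distrib[symmetric], rule sum.cong, auto simp: algebra_simps)
        have e3: "(\<Sum>j = 0..<n. (r * B' $$ (i,j) + C' $$ (i,j)) * w j) \<le> (\<Sum>j = 0..<n. (r * B $$ (i,j) + C $$ (i,j)) * w j)"
        proof (rule sum_mono)
          fix j assume "j \<in> {0..<n}"
          hence j: "j < n" by auto
          have "(1 - r) * (B' $$ (i,j) - B $$ (i,j)) \<ge> 0" using r1 D[OF True j] by simp
          hence "r * B' $$ (i,j) + C' $$ (i,j) \<le> r * B $$ (i,j) + C $$ (i,j)"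
            using E[OF True j] by (simp add: algebra_simps)
          thus "(r * B' $$ (i,j) + C' $$ (i,j)) * w j \<le> (r * B $$ (i,j) + C $$ (i,j)) * w j"
            using w0[of j] by (rule mult_right_mono)
        qed
        have e4: "(\<Sum>j = 0..<n. (r * B' $$ (i,j) + C' $$ (i,j)) * w j) = (\<Sum>j = 0..<n. B' $$ (i,j) * (r * w j)) + (\<Sum>j = 0..<n. C' $$ (i,j) * w j)"
          by (subst sum.distrib[symmetric], rule sum.cong, auto simp: algebra_simps)
        have "r * (r * w i) \<le> (W *\<^sub>v u) $ i" using ineq[OF True] e1 e2 e3 e4 by linarith
        thus ?thesis using ulo[OF True] by simp
      next
        case False
        then obtain i' where ii: "i = n + i'" "i' < n" using i by (metis add_less_cancel_left le_add_diff_inverse not_less)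
        have "(W *\<^sub>v u) $ i = (\<Sum>j = 0..<n. (if i' = j then u $ j else 0)) + (\<Sum>j = 0..<n. 0)"
          unfolding split unfolding ii(1) using WentB ii(2) by (intro arg_cong2[where f="(+)"] sum.cong, auto)
        also have "\<dots> = u $ i'" using ii by simp
        also have "\<dots> = r * u $ i" using ulo[OF ii(2)] uhi[OF ii(2)] ii by simp
        finally show ?thesis by simp
      qed
    qed
    have nW: "mat_nonneg W" unfolding mat_nonneg_def
    proof (intro allI impI)
      fix i j assume "i < dim_row W" "j < dim_col W"
      hence ij: "i < n + n" "j < n + n" using W by auto
      show "0 \<le> W $$ (i,j)"
        using nB nC B C ij unfolding W_def mat_nonneg_def by (auto simp: index_mat_four_block)
    qed
    have "r \<le> rspectral_radius W"
      by (rule spec_ge[OF W nW u u0, of "n + i1"], insert i1 uhi r0 Wu, auto)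
    thus ?thesis unfolding r_def W_def W'_def .
  qed
qed


lemma nonneg_minus: fixes A B :: "real mat" assumes "A \<in> carrier_mat r c" "B \<in> carrier_mat r c"
  and "mat_nonneg A" "mat_nonpos B" shows "mat_nonneg (A - B)"
  using assms unfolding mat_nonneg_def mat_nonpos_def by (auto, meson order.trans)

lemma nonneg_uminus: fixes B :: "real mat" assumes "mat_nonpos B" shows "mat_nonneg (- B)"
  using assms unfolding mat_nonneg_def mat_nonpos_def by auto

theorem theorem3p19:
  fixes A P1 R1 S1 P2 R2 S2 :: "real mat" and m n :: nat
  assumes "A \<in> carrier_mat m n" and "0 < m" and "0 < n"
    and "semi_monotone A"
    and "double_proper_weak_regular_splitting A P1 R1 S1"
    and "double_proper_regular_splitting A P2 R2 S2"
    and "mat_kernel S2 = mat_kernel P2" and "mat_range S2 = mat_range P2"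
    and "1 \<notin> rspectrum (S2 * mp_inv P1)"
    and "-1 \<notin> rspectrum (R2 * mp_inv P1)"
    and "mat_nonneg (mp_inv ((1\<^sub>m m - S2 * mp_inv P1) * A))"
    and "mat_nonneg (mp_inv ((1\<^sub>m m + R2 * mp_inv P1) * A))"
    and "mat_ge (mp_inv P2 * (R2 * mp_inv P1 * R1 - S2))
                (mp_inv P2 * (R2 - S2 * mp_inv P1 * R1))"
    and "mat_ge (mp_inv P2 * ((1\<^sub>m m + R2 * mp_inv P1) * A))
                (mp_inv P2 * ((1\<^sub>m m - S2 * mp_inv P1) * A))"
  shows "rspectral_radius
           (four_block_mat (mp_inv P2 * R2 * mp_inv P1 * R1 - mp_inv P2 * S2)
                           (- (mp_inv P2 * R2 * mp_inv P1 * S1))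
                           (1\<^sub>m n) (0\<^sub>m n n))
         \<le> rspectral_radius
           (four_block_mat (mp_inv P2 * R2 - mp_inv P2 * S2 * mp_inv P1 * R1)
                           (mp_inv P2 * S2 * mp_inv P1 * S1)
                           (1\<^sub>m n) (0\<^sub>m n n))
       \<and> rspectral_radius
           (four_block_mat (mp_inv P2 * R2 - mp_inv P2 * S2 * mp_inv P1 * R1)
                           (mp_inv P2 * S2 * mp_inv P1 * S1)
                           (1\<^sub>m n) (0\<^sub>m n n)) < 1"
proof -
  note Ac0 = assms(1)
  have dA: "dim_row A = m" "dim_col A = n" using Ac0 by auto
  from assms(5)[unfolded double_proper_weak_regular_splitting_def double_proper_splitting_def dA]
  have P1: "P1 \<in> carrier_mat m n" and R1: "R1 \<in> carrier_mat m n" and S1: "S1 \<in> carrier_mat m n"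
    and A1: "A = P1 - R1 + S1" and rng1: "mat_range P1 = mat_range A" and ker1: "mat_kernel P1 = mat_kernel A"
    and nY1: "mat_nonneg (mp_inv P1)" and nY1R1: "mat_nonneg (mp_inv P1 * R1)" and nY1S1: "mat_nonpos (mp_inv P1 * S1)"
    by auto
  from assms(6)[unfolded double_proper_regular_splitting_def double_proper_splitting_def dA]
  have P2: "P2 \<in> carrier_mat m n" and R2: "R2 \<in> carrier_mat m n" and S2: "S2 \<in> carrier_mat m n"
    and A2: "A = P2 - R2 + S2" and rng2: "mat_range P2 = mat_range A" and ker2: "mat_kernel P2 = mat_kernel A"
    and nY2: "mat_nonneg (mp_inv P2)" and nR2: "mat_nonneg R2" and nS2: "mat_nonpos S2"
    by auto
  define Y1 where "Y1 = mp_inv P1"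
  define Y2 where "Y2 = mp_inv P2"
  note Y1D = mp_invD[OF P1, folded Y1_def]
  note Y2D = mp_invD[OF P2, folded Y2_def]
  have Y1: "Y1 \<in> carrier_mat n m" using Y1D by simp
  have Y2: "Y2 \<in> carrier_mat n m" using Y2D by simp
  have d: "dim_row P1 = m" "dim_col P1 = n" "dim_row R1 = m" "dim_col R1 = n" "dim_row S1 = m" "dim_col S1 = n"
    "dim_row P2 = m" "dim_col P2 = n" "dim_row R2 = m" "dim_col R2 = n" "dim_row S2 = m" "dim_col S2 = n"
    "dim_row Y1 = n" "dim_col Y1 = m" "dim_row Y2 = n" "dim_col Y2 = m"
    using P1 R1 S1 P2 R2 S2 Y1 Y2 by auto
  have kerS2: "mat_kernel P1 \<subseteq> mat_kernel S2" using ker1 ker2 assms(7) by simp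
  have kerR2: "mat_kernel P1 \<subseteq> mat_kernel R2"
  proof
    fix v assume "v \<in> mat_kernel P1"
    hence vA: "v \<in> mat_kernel A" and vP2: "v \<in> mat_kernel P2" and vS2: "v \<in> mat_kernel S2"
      using ker1 ker2 assms(7) by auto
    have v: "v \<in> carrier_vec n" using vA Ac0 by (auto simp: mat_kernel_def)
    have Av: "A *\<^sub>v v = 0\<^sub>v m" using mat_kernelD(2)[OF Ac0 vA] .
    have Pv: "P2 *\<^sub>v v = 0\<^sub>v m" using mat_kernelD(2)[OF P2 vP2] .
    have Sv: "S2 *\<^sub>v v = 0\<^sub>v m" using mat_kernelD(2)[OF S2 vS2] .
    have "R2 *\<^sub>v v = 0\<^sub>v m"
    proof (rule eq_vecI)
      fix i assume "i < dim_vec (0\<^sub>v m :: real vec)"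
      hence i: "i < m" by simp
      have "(R2 *\<^sub>v v) $ i = (\<Sum>j = 0..<n. (P2 $$ (i,j) + S2 $$ (i,j) - A $$ (i,j)) * v $ j)"
        unfolding mv_entry[OF R2 v i] using A2 i d by (intro sum.cong, auto)
      also have "\<dots> = (P2 *\<^sub>v v) $ i + (S2 *\<^sub>v v) $ i - (A *\<^sub>v v) $ i"
        unfolding mv_entry[OF P2 v i] mv_entry[OF S2 v i] mv_entry[OF Ac0 v i]
        by (simp add: algebra_simps sum.distrib sum_subtractf)
      also have "\<dots> = 0" using Av Pv Sv i by simp
      finally show "(R2 *\<^sub>v v) $ i = 0\<^sub>v m $ i" using i by simp
    qed (insert R2, auto)
    thus "v \<in> mat_kernel R2" using R2 v by (auto intro!: mat_kernelI)
  qed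
  have F1: "S2 * Y1 * P1 = S2" by (rule kerfix[OF P1 Y1 S2 Y1D(2) kerS2])
  have F2: "R2 * Y1 * P1 = R2" by (rule kerfix[OF P1 Y1 R2 Y1D(2) kerR2])
  obtain Z1 where Z1: "Z1 \<in> carrier_mat n n" and PZ1: "P2 = A * Z1"
    using range_mat[OF P2 Ac0] rng2 by auto
  obtain Z2 where Z2: "Z2 \<in> carrier_mat n n" and SZ2: "S2 = A * Z2"
    using range_mat[OF S2 Ac0] rng2 assms(8) by auto
  define Z3 where "Z3 = Z1 + Z2 - 1\<^sub>m n"
  have Z3: "Z3 \<in> carrier_mat n n" unfolding Z3_def using Z1 Z2 by auto
  have dZ: "dim_row Z1 = n" "dim_col Z1 = n" "dim_row Z2 = n" "dim_col Z2 = n" using Z1 Z2 by auto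
  have RZ3: "R2 = A * Z3"
  proof -
    have "A * Z3 = A * Z1 + A * Z2 - A" unfolding Z3_def using dA dZ by (simp add: malg)
    also have "\<dots> = R2"
    proof (rule eq_matI)
      fix i j assume ij: "i < dim_row R2" "j < dim_col R2"
      from arg_cong[OF A2, of "\<lambda>M. M $$ (i,j)"] ij d
      have "A $$ (i,j) = P2 $$ (i,j) - R2 $$ (i,j) + S2 $$ (i,j)" by simp
      thus "(A * Z1 + A * Z2 - A) $$ (i,j) = R2 $$ (i,j)" using ij d dA dZ PZ1 SZ2 by simp
    qed (insert d dA dZ, auto)
    finally show ?thesis by simp
  qed
  define Kh where "Kh = 1\<^sub>m m - S2 * Y1"
  define Kc where "Kc = 1\<^sub>m m + R2 * Y1"
  define Ah where "Ah = Kh * A"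
  define Ac where "Ac = Kc * A"
  have Kh: "Kh \<in> carrier_mat m m" unfolding Kh_def using S2 Y1 by auto
  have Kc: "Kc \<in> carrier_mat m m" unfolding Kc_def using R2 Y1 by auto
  have Ah: "Ah \<in> carrier_mat m n" unfolding Ah_def using Kh Ac0 by auto
  have Acc: "Ac \<in> carrier_mat m n" unfolding Ac_def using Kc Ac0 by auto
  have injh: "\<And>v. v \<in> carrier_vec m \<Longrightarrow> Kh *\<^sub>v v = 0\<^sub>v m \<Longrightarrow> v = 0\<^sub>v m"
  proof (rule ccontr)
    fix v assume v: "v \<in> carrier_vec m" and Kv: "Kh *\<^sub>v v = 0\<^sub>v m" and v0: "v \<noteq> 0\<^sub>v m"
    have SY: "S2 * Y1 \<in> carrier_mat m m" using S2 Y1 by auto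
    have "(S2 * Y1) *\<^sub>v v = 1 \<cdot>\<^sub>v v"
    proof (rule eq_vecI)
      fix i assume "i < dim_vec (1 \<cdot>\<^sub>v v)"
      hence i: "i < m" using v by simp
      have "(Kh *\<^sub>v v) $ i = v $ i - ((S2 * Y1) *\<^sub>v v) $ i"
        unfolding Kh_def using i v SY d by (simp add: minus_mult_distrib_mat_vec[of "1\<^sub>m m" m m "S2 * Y1" v])
      thus "((S2 * Y1) *\<^sub>v v) $ i = (1 \<cdot>\<^sub>v v) $ i" using Kv i v by simp
    qed (insert v SY, auto)
    from eig_of[OF SY v v0 this] assms(9) show False unfolding Y1_def by simp
  qed
  have injc: "\<And>v. v \<in> carrier_vec m \<Longrightarrow> Kc *\<^sub>v v = 0\<^sub>v m \<Longrightarrow> v = 0\<^sub>v m"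
  proof (rule ccontr)
    fix v assume v: "v \<in> carrier_vec m" and Kv: "Kc *\<^sub>v v = 0\<^sub>v m" and v0: "v \<noteq> 0\<^sub>v m"
    have RY: "R2 * Y1 \<in> carrier_mat m m" using R2 Y1 by auto
    have "(R2 * Y1) *\<^sub>v v = (-1) \<cdot>\<^sub>v v"
    proof (rule eq_vecI)
      fix i assume "i < dim_vec ((-1) \<cdot>\<^sub>v v)"
      hence i: "i < m" using v by simp
      have "(Kc *\<^sub>v v) $ i = v $ i + ((R2 * Y1) *\<^sub>v v) $ i"
        unfolding Kc_def using i v RY d by (simp add: add_mult_distrib_mat_vec[of "1\<^sub>m m" m m "R2 * Y1" v])
      thus "((R2 * Y1) *\<^sub>v v) $ i = ((-1) \<cdot>\<^sub>v v) $ i" using Kv i v by simp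
    qed (insert v RY, auto)
    from eig_of[OF RY v v0 this] assms(10) show False unfolding Y1_def by simp
  qed
  obtain Kh' where Kh': "Kh' \<in> carrier_mat m m" and KKh: "Kh * Kh' = 1\<^sub>m m" using inv_exists[OF Kh injh] by auto
  obtain Kc' where Kc': "Kc' \<in> carrier_mat m m" and KKc: "Kc * Kc' = 1\<^sub>m m" using inv_exists[OF Kc injc] by auto
  have Khform: "Kh = 1\<^sub>m m - A * (Z2 * Y1)" unfolding Kh_def SZ2 using dA dZ d by (simp add: assoc')
  have Kcform: "Kc = 1\<^sub>m m - A * (- (Z3 * Y1))"
  proof -
    have "A * (- (Z3 * Y1)) = - (R2 * Y1)" unfolding RZ3 using dA Z3 d by (simp add: assoc')
    moreover have "1\<^sub>m m - - (R2 * Y1) = Kc" unfolding Kc_def using d by (intro eq_matI, auto)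
    ultimately show ?thesis by simp
  qed
  obtain Zh where Zh: "Zh \<in> carrier_mat n n" and PZh: "P2 = Ah * Zh"
    using range_inv[OF Ac0 P2 Z1 PZ1 _ Khform Kh' KKh] Z2 Y1 unfolding Ah_def by auto
  obtain Zc where Zc: "Zc \<in> carrier_mat n n" and PZc: "P2 = Ac * Zc"
    using range_inv[OF Ac0 P2 Z1 PZ1 _ Kcform Kc' KKc] Z3 Y1 unfolding Ac_def by auto
  have kerh: "mat_kernel P2 \<subseteq> mat_kernel Ah" unfolding Ah_def using ker_KA[OF Ac0 Kh] ker2 by simp
  have kerc: "mat_kernel P2 \<subseteq> mat_kernel Ac" unfolding Ac_def using ker_KA[OF Ac0 Kc] ker2 by simp
  define Xh where "Xh = mp_inv Ah"
  define Xc where "Xc = mp_inv Ac"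
  have Xh: "Xh \<in> carrier_mat n m" unfolding Xh_def using mp_invD[OF Ah] by simp
  have Xc: "Xc \<in> carrier_mat n m" unfolding Xc_def using mp_invD[OF Acc] by simp
  note idh = mp_ident[OF P2 Ah mp_inv[of P2, folded Y2_def] mp_inv[of Ah, folded Xh_def] kerh Zh PZh]
  note idc = mp_ident[OF P2 Acc mp_inv[of P2, folded Y2_def] mp_inv[of Ac, folded Xc_def] kerc Zc PZc]
  define R' where "R' = R2 - S2 * Y1 * R1"
  define S' where "S' = S2 * Y1 * S1"
  define R'' where "R'' = R2 * Y1 * R1 - S2"
  define S'' where "S'' = - (R2 * Y1 * S1)"
  have dRS: "dim_row R' = m" "dim_col R' = n" "dim_row S' = m" "dim_col S' = n"
    "dim_row R'' = m" "dim_col R'' = n" "dim_row S'' = m" "dim_col S'' = n"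
    unfolding R'_def S'_def R''_def S''_def using d by auto
  have dX: "dim_row Xh = n" "dim_col Xh = m" "dim_row Xc = n" "dim_col Xc = m" using Xh Xc by auto
  have dAhc: "dim_row Ah = m" "dim_col Ah = n" "dim_row Ac = m" "dim_col Ac = n" using Ah Acc by auto
  have QA: "S2 * Y1 * A = S2 - S2 * Y1 * R1 + S2 * Y1 * S1"
  proof -
    have "S2 * Y1 * A = S2 * Y1 * P1 - S2 * Y1 * R1 + S2 * Y1 * S1"
      unfolding A1 using d by (simp add: malg)
    thus ?thesis using F1 d by (simp add: assoc')
  qed
  have QcA: "R2 * Y1 * A = R2 - R2 * Y1 * R1 + R2 * Y1 * S1"
  proof -
    have "R2 * Y1 * A = R2 * Y1 * P1 - R2 * Y1 * R1 + R2 * Y1 * S1"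
      unfolding A1 using d by (simp add: malg)
    thus ?thesis using F2 d by (simp add: assoc')
  qed
  have Ah_eq: "Ah = A - S2 * Y1 * A" unfolding Ah_def Kh_def using d dA by (simp add: malg)
  have Ac_eq: "Ac = A + R2 * Y1 * A" unfolding Ac_def Kc_def using d dA by (simp add: malg)
  have sumh: "R' + S' = P2 - Ah"
  proof (rule eq_matI)
    fix i j assume ij: "i < dim_row (P2 - Ah)" "j < dim_col (P2 - Ah)"
    hence ij': "i < m" "j < n" using d dAhc by auto
    have e1: "A $$ (i,j) = P2 $$ (i,j) - R2 $$ (i,j) + S2 $$ (i,j)" using arg_cong[OF A2, of "\<lambda>M. M $$ (i,j)"] ij' d by simp
    have e2: "Ah $$ (i,j) = A $$ (i,j) - (S2 * Y1 * A) $$ (i,j)" using arg_cong[OF Ah_eq, of "\<lambda>M. M $$ (i,j)"] ij' d dA by simp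
    have e3: "(S2 * Y1 * A) $$ (i,j) = S2 $$ (i,j) - (S2 * Y1 * R1) $$ (i,j) + (S2 * Y1 * S1) $$ (i,j)"
      using arg_cong[OF QA, of "\<lambda>M. M $$ (i,j)"] ij' d by simp
    show "(R' + S') $$ (i,j) = (P2 - Ah) $$ (i,j)" unfolding R'_def S'_def
      using ij' d dAhc e1 e2 e3 by simp
  qed (insert dRS d dAhc, auto)
  have sumc: "R'' + S'' = P2 - Ac"
  proof (rule eq_matI)
    fix i j assume ij: "i < dim_row (P2 - Ac)" "j < dim_col (P2 - Ac)"
    hence ij': "i < m" "j < n" using d dAhc by auto
    have e1: "A $$ (i,j) = P2 $$ (i,j) - R2 $$ (i,j) + S2 $$ (i,j)" using arg_cong[OF A2, of "\<lambda>M. M $$ (i,j)"] ij' d by simp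
    have e2: "Ac $$ (i,j) = A $$ (i,j) + (R2 * Y1 * A) $$ (i,j)" using arg_cong[OF Ac_eq, of "\<lambda>M. M $$ (i,j)"] ij' d dA by simp
    have e3: "(R2 * Y1 * A) $$ (i,j) = R2 $$ (i,j) - (R2 * Y1 * R1) $$ (i,j) + (R2 * Y1 * S1) $$ (i,j)"
      using arg_cong[OF QcA, of "\<lambda>M. M $$ (i,j)"] ij' d by simp
    show "(R'' + S'') $$ (i,j) = (P2 - Ac) $$ (i,j)" unfolding R''_def S''_def
      using ij' d dAhc e1 e2 e3 by simp
  qed (insert dRS d dAhc, auto)
  have idenh: "Y2 * R' * Xh + Y2 * S' * Xh = Xh - Y2"
  proof -
    have "Y2 * R' * Xh + Y2 * S' * Xh = Y2 * (R' + S') * Xh" using d dRS dX by (simp add: malg)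
    also have "\<dots> = Y2 * P2 * Xh - Y2 * Ah * Xh" unfolding sumh using d dAhc dX by (simp add: malg)
    also have "\<dots> = Xh - Y2" using idh by simp
    finally show ?thesis .
  qed
  have idenc: "Y2 * R'' * Xc + Y2 * S'' * Xc = Xc - Y2"
  proof -
    have "Y2 * R'' * Xc + Y2 * S'' * Xc = Y2 * (R'' + S'') * Xc" using d dRS dX by (simp add: malg)
    also have "\<dots> = Y2 * P2 * Xc - Y2 * Ac * Xc" unfolding sumc using d dAhc dX by (simp add: malg)
    also have "\<dots> = Xc - Y2" using idc by simp
    finally show ?thesis .
  qed
  have R'c: "R' \<in> carrier_mat m n" and S'c: "S' \<in> carrier_mat m n"
    and R''c: "R'' \<in> carrier_mat m n" and S''c: "S'' \<in> carrier_mat m n" using dRS by auto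
  have nY1R1': "mat_nonneg (Y1 * R1)" using nY1R1 unfolding Y1_def .
  have nY1S1': "mat_nonpos (Y1 * S1)" using nY1S1 unfolding Y1_def .
  have nY2': "mat_nonneg Y2" using nY2 unfolding Y2_def .
  have Y1R1: "Y1 * R1 \<in> carrier_mat n n" and Y1S1: "Y1 * S1 \<in> carrier_mat n n"
    and Y2R2: "Y2 * R2 \<in> carrier_mat n n" and Y2S2: "Y2 * S2 \<in> carrier_mat n n"
    using Y1 Y2 R1 S1 R2 S2 by auto
  have nY2R2: "mat_nonneg (Y2 * R2)" by (rule nonneg_mult[OF Y2 R2 nY2' nR2])
  have nY2S2: "mat_nonpos (Y2 * S2)" by (rule sign_nn_np[OF Y2 S2 nY2' nS2])
  have eB: "Y2 * R' = Y2 * R2 - (Y2 * S2) * (Y1 * R1)" unfolding R'_def using d by (simp add: malg)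
  have eC: "Y2 * S' = (Y2 * S2) * (Y1 * S1)" unfolding S'_def using d by (simp add: malg)
  have eB': "Y2 * R'' = (Y2 * R2) * (Y1 * R1) - Y2 * S2" unfolding R''_def using d by (simp add: malg)
  have eC': "Y2 * S'' = - ((Y2 * R2) * (Y1 * S1))" unfolding S''_def using d by (simp add: malg)
  have nB: "mat_nonneg (Y2 * R')" unfolding eB
    by (rule nonneg_minus[OF Y2R2 _ nY2R2 sign_np_nn[OF Y2S2 Y1R1 nY2S2 nY1R1']], insert Y2S2 Y1R1, auto)
  have nC: "mat_nonneg (Y2 * S')" unfolding eC by (rule sign_np_np[OF Y2S2 Y1S1 nY2S2 nY1S1'])
  have nB': "mat_nonneg (Y2 * R'')" unfolding eB'
    by (rule nonneg_minus[OF _ Y2S2 nonneg_mult[OF Y2R2 Y1R1 nY2R2 nY1R1'] nY2S2], insert Y2R2 Y1R1, auto)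
  have nC': "mat_nonneg (Y2 * S'')" unfolding eC' by (rule nonneg_uminus[OF sign_nn_np[OF Y2R2 Y1S1 nY2R2 nY1S1']])
  have nXh: "mat_nonneg Xh" using assms(11) unfolding Xh_def Ah_def Kh_def Y1_def .
  have nXc: "mat_nonneg Xc" using assms(12) unfolding Xc_def Ac_def Kc_def Y1_def .
  define W where "W = four_block_mat (Y2 * R') (Y2 * S') (1\<^sub>m n) (0\<^sub>m n n)"
  define W' where "W' = four_block_mat (Y2 * R'') (Y2 * S'') (1\<^sub>m n) (0\<^sub>m n n)"
  have nn: "n + n > 0" using assms(3) by simp
  have ltW: "rspectral_radius W < 1"
  proof -
    have Wc: "map_mat complex_of_real W \<in> carrier_mat (n+n) (n+n)" unfolding W_def using Y2 R'c S'c by auto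
    from spectral_radius_mem_max(1)[OF Wc nn] obtain mu where mu: "mu \<in> spectrum (map_mat complex_of_real W)"
      and eq: "spectral_radius (map_mat complex_of_real W) = cmod mu" by blast
    have "cmod mu < 1" by (rule spec_lt1[OF Y2 Xh R'c S'c nY2' nXh nB nC idenh], insert mu, unfold W_def)
    thus ?thesis using eq unfolding rspectral_radius_def by simp
  qed
  have ltW': "rspectral_radius W' < 1"
  proof -
    have Wc: "map_mat complex_of_real W' \<in> carrier_mat (n+n) (n+n)" unfolding W'_def using Y2 R''c S''c by auto
    from spectral_radius_mem_max(1)[OF Wc nn] obtain mu where mu: "mu \<in> spectrum (map_mat complex_of_real W')"
      and eq: "spectral_radius (map_mat complex_of_real W') = cmod mu" by blast
    have "cmod mu < 1" by (rule spec_lt1[OF Y2 Xc R''c S''c nY2' nXc nB' nC' idenc], insert mu, unfold W'_def)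
    thus ?thesis using eq unfolding rspectral_radius_def by simp
  qed
  have Bc: "Y2 * R' \<in> carrier_mat n n" and Cc: "Y2 * S' \<in> carrier_mat n n"
    and B'c: "Y2 * R'' \<in> carrier_mat n n" and C'c: "Y2 * S'' \<in> carrier_mat n n"
    using Y2 R'c S'c R''c S''c by auto
  have hyp1: "mat_ge (Y2 * R'') (Y2 * R')" using assms(13) unfolding Y1_def Y2_def R'_def R''_def .
  have hyp2: "mat_ge (Y2 * Ac) (Y2 * Ah)" using assms(14) unfolding Y1_def Y2_def Ac_def Ah_def Kc_def Kh_def .
  have D: "\<And>i j. i < n \<Longrightarrow> j < n \<Longrightarrow> (Y2 * R') $$ (i,j) \<le> (Y2 * R'') $$ (i,j)"
    using hyp1 B'c unfolding mat_ge_def by (auto simp del: index_mult_mat)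
  have sh: "Y2 * R' + Y2 * S' = Y2 * P2 - Y2 * Ah"
  proof -
    have "Y2 * R' + Y2 * S' = Y2 * (R' + S')" using d dRS by (simp add: malg)
    also have "\<dots> = Y2 * P2 - Y2 * Ah" unfolding sumh using d dAhc by (simp add: malg)
    finally show ?thesis .
  qed
  have sc: "Y2 * R'' + Y2 * S'' = Y2 * P2 - Y2 * Ac"
  proof -
    have "Y2 * R'' + Y2 * S'' = Y2 * (R'' + S'')" using d dRS by (simp add: malg)
    also have "\<dots> = Y2 * P2 - Y2 * Ac" unfolding sumc using d dAhc by (simp add: malg)
    finally show ?thesis .
  qed
  have E: "\<And>i j. i < n \<Longrightarrow> j < n \<Longrightarrow> (Y2 * R'') $$ (i,j) - (Y2 * R') $$ (i,j) \<le> (Y2 * S') $$ (i,j) - (Y2 * S'') $$ (i,j)"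
  proof -
    fix i j assume ij: "i < n" "j < n"
    have Y2Ac: "Y2 * Ac \<in> carrier_mat n n" using Y2 Acc by auto
    have h2: "(Y2 * Ah) $$ (i,j) \<le> (Y2 * Ac) $$ (i,j)" using hyp2 Y2Ac ij unfolding mat_ge_def by (auto simp del: index_mult_mat)
    have s1: "(Y2 * R') $$ (i,j) + (Y2 * S') $$ (i,j) = (Y2 * P2) $$ (i,j) - (Y2 * Ah) $$ (i,j)"
      using arg_cong[OF sh, of "\<lambda>M. M $$ (i,j)"] ij d dRS dAhc by (simp del: index_mult_mat(1))
    have s2: "(Y2 * R'') $$ (i,j) + (Y2 * S'') $$ (i,j) = (Y2 * P2) $$ (i,j) - (Y2 * Ac) $$ (i,j)"
      using arg_cong[OF sc, of "\<lambda>M. M $$ (i,j)"] ij d dRS dAhc by (simp del: index_mult_mat(1))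
    show "(Y2 * R'') $$ (i,j) - (Y2 * R') $$ (i,j) \<le> (Y2 * S') $$ (i,j) - (Y2 * S'') $$ (i,j)"
      using h2 s1 s2 by linarith
  qed
  have cmp: "rspectral_radius W' \<le> rspectral_radius W"
    unfolding W_def W'_def
    by (rule compare[OF Bc Cc B'c C'c assms(3) nB nC nB' nC' D E], insert ltW', auto simp: W'_def)
  have b1: "Y2 * R2 - Y2 * S2 * Y1 * R1 = Y2 * R'" unfolding R'_def using d by (simp add: malg)
  have b2: "Y2 * S2 * Y1 * S1 = Y2 * S'" unfolding S'_def using d by (simp add: malg)
  have b3: "Y2 * R2 * Y1 * R1 - Y2 * S2 = Y2 * R''" unfolding R''_def using d by (simp add: malg)
  have b4: "- (Y2 * R2 * Y1 * S1) = Y2 * S''" unfolding S''_def using d by (simp add: malg)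
  show ?thesis unfolding Y1_def[symmetric] Y2_def[symmetric] b1 b2 b3 b4
    using cmp ltW unfolding W_def W'_def by simp
qed


end
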